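(* Let $H$ be a complex Hilbert space with inner product $\langle\cdot,\cdot\rangle$ and norm $|\cdot|$, and let $-A$ be the generator of a uniformly bounded holomorphic semigroup $e^{-tA}$ in $H$. Then the following are equivalent: (i) for every $x\in D(A^2)$ with $|x|=1$, $2\big(\operatorname{Re}\langle Ax,x\rangle\big)^2\le \operatorname{Re}\langle A^2x,x\rangle+|Ax|^2$; (ii) for every $u_0\in H$ with $u_0\neq0$, the height function $h(t)=|e^{-tA}u_0|$ is log-convex on $[0,\infty[$, that is, for all $0\le r<s<t$, $|e^{-sA}u_0|\le |e^{-rA}u_0|^{\frac{t-s}{t-r}}|e^{-tA}u_0|^{\frac{s-r}{t-r}}$. Furthermore, if in addition to (i) and (ii) the operator $A$ is positively accretive, i.e. $\nu(A)\subset\{z\in\mathbb{C}:\operatorname{Re}z>0\}$, then for every $u_0\neq0$ the function $h(t)=|e^{-tA}u_0|$ is strictly decreasing (hence strictly convex) on $[0,\infty[$ and differentiable from the right at $t=0$ with derivative $h'(0)\in[-\infty,0]$, and for $|u_0|=1$ one has $h'(0)=\inf_{t>0}h'(t)\le -m(A)$. If moreover $u_0\in D(A)$ with $|u_0|=1$, then $h'(0)=-\operatorname{Re}\langle Au_0,u_0\rangle$ and $h\in C^1([0,\infty[,\mathbb{R})\cap C^\infty(]0,\infty[,\mathbb{R})$.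
   Context: A semigroup $e^{-tA}$ in $\mathbb{B}(H)$ is uniformly bounded if $\|e^{-tA}\|\le M$ for all $t\ge0$ and some constant $M$; it is holomorphic if it extends to a holomorphic family $e^{-zA}$ for $z$ in an open sector $\Sigma_\delta=\{z\in\mathbb{C}: |\arg z|<\delta\}$ for some $\delta>0$. The numerical range of $A$ is $\nu(A)=\{\langle Ax,x\rangle: x\in D(A),\ |x|=1\}$ and its lower bound is $m(A)=\inf\operatorname{Re}\nu(A)$. *)

theory Defs
  imports "HOL-Analysis.Analysis"
begin

class complex_hilbert = real_normed_vector + complete_space +
  fixes cscale :: "complex \<Rightarrow> 'a \<Rightarrow> 'a"
    and cinner :: "'a \<Rightarrow> 'a \<Rightarrow> complex"
  assumes cscale_add_right: "cscale a (x + y) = cscale a x + cscale a y"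
    and cscale_add_left: "cscale (a + b) x = cscale a x + cscale b x"
    and cscale_cscale: "cscale a (cscale b x) = cscale (a * b) x"
    and cscale_one: "cscale 1 x = x"
    and cscale_of_real: "cscale (complex_of_real r) x = scaleR r x"
    and cinner_commute: "cinner x y = cnj (cinner y x)"
    and cinner_add_left: "cinner (x + y) z = cinner x z + cinner y z"
    and cinner_cscale_left: "cinner (cscale a x) y = a * cinner x y"
    and cinner_self_norm: "cinner x x = complex_of_real ((norm x)\<^sup>2)"

definition cbounded_linear :: "('a::complex_hilbert \<Rightarrow> 'a) \<Rightarrow> bool" where
  "cbounded_linear f \<longleftrightarrow>
     (\<forall>x y. f (x + y) = f x + f y) \<and>
     (\<forall>c x. f (cscale c x) = cscale c (f x)) \<and>
     (\<exists>K. \<forall>x. norm (f x) \<le> K * norm x)"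

definition op_holomorphic_on :: "(complex \<Rightarrow> 'a::complex_hilbert \<Rightarrow> 'a) \<Rightarrow> complex set \<Rightarrow> bool" where
  "op_holomorphic_on F S \<longleftrightarrow>
     (\<forall>z\<in>S. \<exists>D. cbounded_linear D \<and>
        ((\<lambda>w. onorm (\<lambda>x. F w x - F z x - cscale (w - z) (D x)) / cmod (w - z)) \<longlongrightarrow> 0) (at z))"

definition sector :: "real \<Rightarrow> complex set" where
  "sector \<delta> = {z. z \<noteq> 0 \<and> \<bar>Arg z\<bar> < \<delta>}"

text \<open>Strongly continuous semigroup T t for t \<ge> 0 (values for negative t are irrelevant).\<close>

definition C0_semigroup :: "(real \<Rightarrow> 'a::complex_hilbert \<Rightarrow> 'a) \<Rightarrow> bool" where
  "C0_semigroup T \<longleftrightarrow>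
     (\<forall>t\<ge>0. cbounded_linear (T t)) \<and>
     T 0 = id \<and>
     (\<forall>s\<ge>0. \<forall>t\<ge>0. T (s + t) = T s \<circ> T t) \<and>
     (\<forall>x. continuous_on {0..} (\<lambda>t. T t x))"

definition uniformly_bounded_semigroup :: "(real \<Rightarrow> 'a::complex_hilbert \<Rightarrow> 'a) \<Rightarrow> bool" where
  "uniformly_bounded_semigroup T \<longleftrightarrow> (\<exists>M. \<forall>t\<ge>0. \<forall>x. norm (T t x) \<le> M * norm x)"

definition holomorphic_semigroup :: "(real \<Rightarrow> 'a::complex_hilbert \<Rightarrow> 'a) \<Rightarrow> bool" where
  "holomorphic_semigroup T \<longleftrightarrow>
     (\<exists>\<delta>>0. \<exists>F. (\<forall>t>0. F (complex_of_real t) = T t) \<and>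
               (\<forall>z\<in>sector \<delta>. cbounded_linear (F z)) \<and>
               op_holomorphic_on F (sector \<delta>))"

definition is_generator :: "(real \<Rightarrow> 'a::complex_hilbert \<Rightarrow> 'a) \<Rightarrow> 'a set \<Rightarrow> ('a \<Rightarrow> 'a) \<Rightarrow> bool" where
  "is_generator T D G \<longleftrightarrow>
     D = {x. \<exists>y. ((\<lambda>h. scaleR (1 / h) (T h x - x)) \<longlongrightarrow> y) (at_right 0)} \<and>
     (\<forall>x\<in>D. ((\<lambda>h. scaleR (1 / h) (T h x - x)) \<longlongrightarrow> G x) (at_right 0))"

definition numerical_range :: "'a::complex_hilbert set \<Rightarrow> ('a \<Rightarrow> 'a) \<Rightarrow> complex set" where
  "numerical_range D A = {cinner (A x) x | x. x \<in> D \<and> norm x = (1::real)}"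

definition num_lower_bound :: "'a::complex_hilbert set \<Rightarrow> ('a \<Rightarrow> 'a) \<Rightarrow> real" where
  "num_lower_bound D A = Inf (Re ` numerical_range D A)"

definition strictly_convex_on :: "real set \<Rightarrow> (real \<Rightarrow> real) \<Rightarrow> bool" where
  "strictly_convex_on S f \<longleftrightarrow>
     (\<forall>x\<in>S. \<forall>y\<in>S. x \<noteq> y \<longrightarrow> (\<forall>u. 0 < u \<and> u < 1 \<longrightarrow>
        f ((1 - u) * x + u * y) < (1 - u) * f x + u * f y))"

end

theory Submission
  imports Defs "HOL-Complex_Analysis.Conformal_Mappings"
begin

lemma cinner_zero_left[simp]: "cinner 0 y = 0"
  by (metis add_cancel_right_left cinner_add_left)
lemma cinner_add_right: "cinner x (y + z) = cinner x y + cinner x z"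
  by (metis cinner_add_left cinner_commute complex_cnj_add)
lemma cinner_zero_right[simp]: "cinner x 0 = 0"
  by (metis cinner_commute cinner_zero_left complex_cnj_zero)
lemma cinner_minus_left: "cinner (- x) y = - cinner x y"
  by (metis add.right_inverse cinner_add_left cinner_zero_left eq_neg_iff_add_eq_0)
lemma cinner_minus_right: "cinner x (- y) = - cinner x y"
  by (metis cinner_commute cinner_minus_left complex_cnj_minus)
lemma cinner_diff_left: "cinner (x - y) z = cinner x z - cinner y z"
  using cinner_add_left[of x "-y" z] cinner_minus_left[of y z] by simp
lemma cinner_diff_right: "cinner x (y - z) = cinner x y - cinner x z"
  using cinner_add_right[of x y "-z"] cinner_minus_right[of x z] by simp
lemma cinner_scaleR_left: "cinner (r *\<^sub>R x) y = of_real r * cinner x y"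
  by (metis cinner_cscale_left cscale_of_real)
lemma cinner_scaleR_right: "cinner x (r *\<^sub>R y) = of_real r * cinner x y"
  by (metis cinner_commute cinner_scaleR_left complex_cnj_complex_of_real complex_cnj_mult)
lemma cinner_cscale_right: "cinner x (cscale a y) = cnj a * cinner x y"
  by (metis cinner_commute cinner_cscale_left complex_cnj_mult)

definition rinner :: "'a::complex_hilbert \<Rightarrow> 'a \<Rightarrow> real" where
  "rinner x y = Re (cinner x y)"

lemma rinner_self: "rinner x x = (norm x)\<^sup>2"
  by (simp add: rinner_def cinner_self_norm)
lemma rinner_commute: "rinner x y = rinner y x"
  unfolding rinner_def by (subst cinner_commute) simp
lemma rinner_add_left: "rinner (x + y) z = rinner x z + rinner y z"
  by (simp add: rinner_def cinner_add_left)
lemma rinner_add_right: "rinner x (y + z) = rinner x y + rinner x z"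
  by (simp add: rinner_def cinner_add_right)
lemma rinner_diff_left: "rinner (x - y) z = rinner x z - rinner y z"
  by (simp add: rinner_def cinner_diff_left)
lemma rinner_diff_right: "rinner x (y - z) = rinner x y - rinner x z"
  by (simp add: rinner_def cinner_diff_right)
lemma rinner_minus_left: "rinner (- x) z = - rinner x z"
  by (simp add: rinner_def cinner_minus_left)
lemma rinner_minus_right: "rinner x (- z) = - rinner x z"
  by (simp add: rinner_def cinner_minus_right)
lemma rinner_scaleR_left: "rinner (r *\<^sub>R x) y = r * rinner x y"
  by (simp add: rinner_def cinner_scaleR_left)
lemma rinner_scaleR_right: "rinner x (r *\<^sub>R y) = r * rinner x y"
  by (simp add: rinner_def cinner_scaleR_right)
lemma rinner_zero_left[simp]: "rinner 0 y = 0" by (simp add: rinner_def)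
lemma rinner_zero_right[simp]: "rinner x 0 = 0" by (simp add: rinner_def)

lemmas rinner_simps = rinner_add_left rinner_add_right rinner_diff_left rinner_diff_right
  rinner_minus_left rinner_minus_right rinner_scaleR_left rinner_scaleR_right

lemma rinner_CS: "\<bar>rinner x y\<bar> \<le> norm x * norm y"
proof (cases "y = 0")
  case True then show ?thesis by simp
next
  case False
  define t where "t = rinner x y / (norm y)\<^sup>2"
  have ny: "(norm y)\<^sup>2 > 0" using False by simp
  have "0 \<le> rinner (x - t *\<^sub>R y) (x - t *\<^sub>R y)" by (simp add: rinner_self)
  also have "\<dots> = (norm x)\<^sup>2 - 2 * t * rinner x y + t\<^sup>2 * (norm y)\<^sup>2"
    unfolding rinner_simps by (simp add: rinner_self rinner_commute[of y x] power2_eq_square algebra_simps)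
  also have "\<dots> = (norm x)\<^sup>2 - (rinner x y)\<^sup>2 / (norm y)\<^sup>2"
    using ny by (simp add: t_def power2_eq_square field_simps)
  finally have "(rinner x y)\<^sup>2 \<le> (norm x * norm y)\<^sup>2"
    using ny by (simp add: field_simps power_mult_distrib)
  then show ?thesis
    by (metis abs_le_square_iff abs_mult abs_norm_cancel)
qed

lemma norm_cscale: "norm (cscale a x) = cmod a * norm x"
proof -
  have "complex_of_real ((norm (cscale a x))\<^sup>2) = cinner (cscale a x) (cscale a x)"
    by (simp add: cinner_self_norm)
  also have "\<dots> = a * cnj a * cinner x x"
    by (simp add: cinner_cscale_left cinner_cscale_right)
  also have "\<dots> = complex_of_real ((cmod a * norm x)\<^sup>2)"
    by (simp add: cinner_self_norm complex_norm_square[symmetric] power_mult_distrib)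
  finally have "(norm (cscale a x))\<^sup>2 = (cmod a * norm x)\<^sup>2"
    using of_real_eq_iff by blast
  then show ?thesis by (simp add: power2_eq_iff_nonneg)
qed

lemma cscale_zero[simp]: "cscale a 0 = 0"
  by (metis add_cancel_right_right cscale_add_right)

lemma cinner_CS: "cmod (cinner x y) \<le> norm x * norm y"
proof (cases "cinner x y = 0")
  case True then show ?thesis by simp
next
  case False
  define c where "c = cinner x y"
  define a where "a = cnj c / of_real (cmod c)"
  have ca: "cmod a = 1" using False by (simp add: a_def c_def norm_divide)
  have "cinner (cscale a x) y = of_real (cmod c)"
  proof -
    have "cinner (cscale a x) y = cnj c * c / of_real (cmod c)"
      by (simp add: cinner_cscale_left a_def c_def[symmetric])
    also have "\<dots> = of_real ((cmod c)\<^sup>2) / of_real (cmod c)"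
      by (simp only: complex_norm_square mult.commute)
    also have "\<dots> = of_real (cmod c)" using False by (simp add: c_def power2_eq_square)
    finally show ?thesis .
  qed
  then have "cmod c = rinner (cscale a x) y" by (simp add: rinner_def)
  also have "\<dots> \<le> norm (cscale a x) * norm y" using rinner_CS by (metis abs_le_D1)
  also have "\<dots> = norm x * norm y" by (simp add: norm_cscale ca)
  finally show ?thesis by (simp add: c_def)
qed

lemma bounded_bilinear_rinner: "bounded_bilinear (rinner :: 'a::complex_hilbert \<Rightarrow> 'a \<Rightarrow> real)"
proof
  show "\<exists>K. \<forall>a b. norm (rinner a b) \<le> norm (a::'a) * norm b * K"
    by (rule exI[of _ 1]) (simp add: rinner_CS)
qed (simp_all add: rinner_simps)

lemma cscale_scaleR_commute: "cscale c (r *\<^sub>R x) = r *\<^sub>R cscale c x"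
  by (metis cscale_cscale cscale_of_real mult.commute)

lemma bounded_linear_cscale: "bounded_linear (cscale c)"
proof
  show "\<exists>K. \<forall>x. norm (cscale c x) \<le> norm x * K"
    by (rule exI[of _ "cmod c"]) (simp add: norm_cscale mult.commute)
qed (simp_all add: cscale_add_right cscale_scaleR_commute)

lemma cbounded_linear_imp: "cbounded_linear f \<Longrightarrow> bounded_linear f"
  unfolding cbounded_linear_def
proof (elim conjE exE, unfold_locales)
  fix K assume add: "\<forall>x y. f (x + y) = f x + f y" and sc: "\<forall>c x. f (cscale c x) = cscale c (f x)"
    and K: "\<forall>x. norm (f x) \<le> K * norm x"
  show "f (x + y) = f x + f y" for x y using add by blast
  show "f (r *\<^sub>R x) = r *\<^sub>R f x" for r x using sc by (metis cscale_of_real)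
  show "\<exists>K. \<forall>x. norm (f x) \<le> norm x * K" using K by (metis mult.commute)
qed


lemma VD_quot:
  fixes f :: "real \<Rightarrow> 'b::real_normed_vector"
  assumes "(f has_vector_derivative f') (at t)"
  shows "((\<lambda>h. (1/h) *\<^sub>R (f (t+h) - f t)) \<longlongrightarrow> f') (at_right 0)"
proof -
  have L0: "((\<lambda>y. norm (f y - f t - (y - t) *\<^sub>R f') / norm (y - t)) \<longlongrightarrow> 0) (at t)"
    using assms unfolding has_vector_derivative_def has_derivative_iff_norm by auto
  then have "((\<lambda>h. norm (f (t+h) - f t - h *\<^sub>R f') / norm h) \<longlongrightarrow> 0) (at 0)"
    using LIM_offset_zero[OF L0] by simp
  then have L: "((\<lambda>h. norm (f (t+h) - f t - h *\<^sub>R f') / norm h) \<longlongrightarrow> 0) (at_right 0)"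
    by (rule tendsto_mono[rotated]) (simp add: at_le)
  have "((\<lambda>h. (1/h) *\<^sub>R (f (t+h) - f t) - f') \<longlongrightarrow> 0) (at_right 0)"
  proof (rule Lim_null_comparison[OF _ L])
    show "\<forall>\<^sub>F x in at_right 0. norm ((1/x) *\<^sub>R (f (t+x) - f t) - f') \<le> norm (f (t+x) - f t - x *\<^sub>R f') / norm x"
      using eventually_at_right_less[of 0]
    proof eventually_elim
      case (elim h)
      have "(1/h) *\<^sub>R (f (t+h) - f t) - f' = (1/h) *\<^sub>R (f (t+h) - f t - h *\<^sub>R f')"
        using elim by (simp add: algebra_simps)
      then show ?case using elim by (simp add: divide_simps)
    qed
  qed
  then show ?thesis by (rule LIM_zero_cancel)
qed

locale sg =
  fixes T :: "real \<Rightarrow> 'a::complex_hilbert \<Rightarrow> 'a" and A :: "'a \<Rightarrow> 'a" and DA :: "'a set"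
  assumes semigroup: "C0_semigroup T"
    and gen: "is_generator T DA (\<lambda>x. - A x)"
    and holo: "holomorphic_semigroup T"
begin

lemma T_bl: "t \<ge> 0 \<Longrightarrow> bounded_linear (T t)"
  using semigroup cbounded_linear_imp unfolding C0_semigroup_def by blast

lemma T_add: "t \<ge> 0 \<Longrightarrow> T t (x + y) = T t x + T t y"
  using T_bl[THEN bounded_linear.linear] linear_add by blast
lemma T_diff: "t \<ge> 0 \<Longrightarrow> T t (x - y) = T t x - T t y"
  using T_bl[THEN bounded_linear.linear] linear_diff by blast
lemma T_minus: "t \<ge> 0 \<Longrightarrow> T t (- x) = - T t x"
  using T_bl[THEN bounded_linear.linear] linear_neg by blast
lemma T_scaleR: "t \<ge> 0 \<Longrightarrow> T t (c *\<^sub>R x) = c *\<^sub>R T t x"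
  using T_bl[THEN bounded_linear.linear] linear_scale by blast
lemma T_zero: "t \<ge> 0 \<Longrightarrow> T t 0 = 0"
  using T_bl[THEN bounded_linear.linear] linear_0 by blast
lemma T0: "T 0 x = x"
  using semigroup unfolding C0_semigroup_def by simp
lemma T_comp: "s \<ge> 0 \<Longrightarrow> t \<ge> 0 \<Longrightarrow> T (s + t) x = T s (T t x)"
  using semigroup unfolding C0_semigroup_def by simp
lemma T_cont: "continuous_on {0..} (\<lambda>t. T t x)"
  using semigroup unfolding C0_semigroup_def by simp
lemma T_at0: "((\<lambda>t. T t x) \<longlongrightarrow> x) (at_right 0)"
proof -
  have "((\<lambda>t. T t x) \<longlongrightarrow> T 0 x) (at 0 within {0..})"
    using T_cont[of x] unfolding continuous_on_def by simp
  then show ?thesis by (simp add: T0 at_within_Ici_at_right)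
qed

definition quot :: "'a \<Rightarrow> real \<Rightarrow> 'a" where
  "quot x h = (1/h) *\<^sub>R (T h x - x)"

lemma gen_lim: "x \<in> DA \<Longrightarrow> (quot x \<longlongrightarrow> - A x) (at_right 0)"
  using gen unfolding is_generator_def quot_def by blast

lemma gen_intro: "(quot x \<longlongrightarrow> y) (at_right 0) \<Longrightarrow> x \<in> DA \<and> A x = - y"
proof -
  assume L: "(quot x \<longlongrightarrow> y) (at_right 0)"
  then have "x \<in> DA" using gen unfolding is_generator_def quot_def by blast
  then have "(quot x \<longlongrightarrow> - A x) (at_right 0)" by (rule gen_lim)
  then have "- A x = y" using L tendsto_unique by force
  then show ?thesis using \<open>x \<in> DA\<close> by auto
qed

lemma quot_add: "h > 0 \<Longrightarrow> quot (x + y) h = quot x h + quot y h"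
  by (simp add: quot_def T_add algebra_simps)
lemma quot_scaleR: "h > 0 \<Longrightarrow> quot (c *\<^sub>R x) h = c *\<^sub>R quot x h"
  by (simp add: quot_def T_scaleR algebra_simps)

lemma DA_add: assumes "x \<in> DA" "y \<in> DA" shows "x + y \<in> DA \<and> A (x + y) = A x + A y"
proof -
  have "((\<lambda>h. quot x h + quot y h) \<longlongrightarrow> - A x + - A y) (at_right 0)"
    using gen_lim assms by (intro tendsto_add) auto
  then have "(quot (x + y) \<longlongrightarrow> - A x + - A y) (at_right 0)"
    by (rule Lim_transform_eventually)
       (use eventually_at_right_less[of 0] in \<open>eventually_elim, simp add: quot_add\<close>)
  from gen_intro[OF this] show ?thesis by simp
qed

lemma DA_scaleR: assumes "x \<in> DA" shows "c *\<^sub>R x \<in> DA \<and> A (c *\<^sub>R x) = c *\<^sub>R A x"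
proof -
  have "((\<lambda>h. c *\<^sub>R quot x h) \<longlongrightarrow> c *\<^sub>R (- A x)) (at_right 0)"
    using gen_lim assms by (intro tendsto_scaleR) auto
  then have "(quot (c *\<^sub>R x) \<longlongrightarrow> c *\<^sub>R (- A x)) (at_right 0)"
    by (rule Lim_transform_eventually)
       (use eventually_at_right_less[of 0] in \<open>eventually_elim, simp add: quot_scaleR\<close>)
  from gen_intro[OF this] show ?thesis by simp
qed

lemma DA_minus: assumes "x \<in> DA" shows "- x \<in> DA \<and> A (- x) = - A x"
  using DA_scaleR[OF assms, of "-1"] by simp

lemma DA_diff: assumes "x \<in> DA" "y \<in> DA" shows "x - y \<in> DA \<and> A (x - y) = A x - A y"
  using DA_add[OF assms(1) conjunct1[OF DA_minus[OF assms(2)]]] DA_minus[OF assms(2)] by simp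

lemma commute: assumes "y \<in> DA" "r \<ge> 0" shows "T r y \<in> DA \<and> A (T r y) = T r (A y)"
proof -
  have "((\<lambda>h. T r (quot y h)) \<longlongrightarrow> T r (- A y)) (at_right 0)"
    using gen_lim[OF assms(1)] bounded_linear.tendsto[OF T_bl[OF assms(2)]] by blast
  then have "(quot (T r y) \<longlongrightarrow> T r (- A y)) (at_right 0)"
  proof (rule Lim_transform_eventually)
    show "\<forall>\<^sub>F h in at_right 0. T r (quot y h) = quot (T r y) h"
      using eventually_at_right_less[of 0]
    proof eventually_elim
      case (elim h)
      have "T h (T r y) = T r (T h y)"
        using T_comp[of h r y] T_comp[of r h y] elim assms by (simp add: add.commute)
      then show ?case using elim assms by (simp add: quot_def T_scaleR T_diff)
    qed
  qed
  from gen_intro[OF this] show ?thesis using T_minus assms by simp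
qed

end

lemma C_open: "open {z::complex. c * cmod z < Re z}"
  by (rule open_Collect_less) (intro continuous_intros)+

lemma C_convex: assumes "0 \<le> c" shows "convex {z::complex. c * cmod z < Re z}"
  unfolding convex_alt
proof (intro ballI allI impI, clarsimp)
  fix x y :: complex and u :: real
  assume x: "c * cmod x < Re x" and y: "c * cmod y < Re y" and u: "0 \<le> u" "u \<le> 1"
  have "c * cmod ((1 - u) *\<^sub>R x + u *\<^sub>R y) \<le> c * ((1 - u) * cmod x + u * cmod y)"
    using assms u by (intro mult_left_mono) (auto intro!: order.trans[OF norm_triangle_ineq] simp: abs_of_nonneg)
  also have "\<dots> < (1 - u) * Re x + u * Re y"
  proof -
    have "(1 - u) * (Re x - c * cmod x) + u * (Re y - c * cmod y) > 0"
    proof (cases "u = 0")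
      case True then show ?thesis using x by simp
    next
      case False then have "u > 0" using u by simp
      then have "u * (Re y - c * cmod y) > 0" using y by simp
      moreover have "(1 - u) * (Re x - c * cmod x) \<ge> 0" using x u by simp
      ultimately show ?thesis by linarith
    qed
    then show ?thesis by (simp add: algebra_simps)
  qed
  finally show "c * cmod ((1 - u) *\<^sub>R x + u *\<^sub>R y) < (1 - u) * Re x + u * Re y" .
qed

lemma C_real: assumes "c < 1" "t > 0" shows "c * cmod (complex_of_real t) < Re (complex_of_real t)"
  using assms by simp

context sg begin

lemma holo_data: "\<exists>c F. 0 \<le> c \<and> c < 1 \<and> (\<forall>t>0. F (complex_of_real t) = T t) \<and>
   (\<forall>z. c * cmod z < Re z \<longrightarrow> cbounded_linear (F z) \<and>
      (\<exists>D. cbounded_linear D \<and>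
         ((\<lambda>w. onorm (\<lambda>x. F w x - F z x - cscale (w - z) (D x)) / cmod (w - z)) \<longlongrightarrow> 0) (at z)))"
proof -
  obtain \<delta> F where d: "\<delta> > 0" and FT: "\<forall>t>0. F (complex_of_real t) = T t"
    and Fb: "\<forall>z\<in>sector \<delta>. cbounded_linear (F z)" and Fh: "op_holomorphic_on F (sector \<delta>)"
    using holo unfolding holomorphic_semigroup_def by blast
  define d1 where "d1 = min \<delta> (pi/2)"
  define c where "c = cos d1"
  have d1: "0 < d1" "d1 \<le> pi/2" "d1 \<le> \<delta>" using d by (auto simp: d1_def)
  have c0: "0 \<le> c" unfolding c_def using d1 by (intro cos_ge_zero) auto
  have c1: "c < 1" unfolding c_def using d1 cos_mono_less_eq[of d1 0] by simp
  have sec: "z \<in> sector \<delta>" if z: "c * cmod z < Re z" for z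
  proof -
    have z0: "z \<noteq> 0" using z by auto
    then have "cmod z > 0" by simp
    then have "c < Re z / cmod z" using z by (simp add: field_simps)
    then have "cos d1 < cos \<bar>Arg z\<bar>" using cos_Arg[OF z0] by (simp add: c_def)
    moreover have "\<bar>Arg z\<bar> \<le> pi" using Arg_bounded[of z] by auto
    moreover have X: "cos d1 < cos \<bar>Arg z\<bar> \<longleftrightarrow> \<bar>Arg z\<bar> < d1"
      by (rule cos_mono_less_eq) (use d1 \<open>\<bar>Arg z\<bar> \<le> pi\<close> in auto)
    ultimately have "\<bar>Arg z\<bar> < d1" by blast
    then show ?thesis using z0 d1 by (simp add: sector_def)
  qed
  show ?thesis
    apply (rule exI[of _ c], rule exI[of _ F])
    using c0 c1 FT Fb Fh sec unfolding op_holomorphic_on_def by blast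
qed

lemma diff_op_bl:
  assumes "cbounded_linear F1" "cbounded_linear F2" "cbounded_linear D"
  shows "bounded_linear (\<lambda>x. F1 x - F2 x - cscale a (D x))"
  using assms by (intro bounded_linear_sub bounded_linear_compose[OF bounded_linear_cscale]
      cbounded_linear_imp)

lemma L1_raw: assumes "t > 0" shows "\<exists>D. ((\<lambda>\<tau>. T \<tau> y) has_vector_derivative D) (at t)"
proof -
  obtain c F where c: "0 \<le> c" "c < 1" and FT: "\<forall>t>0. F (complex_of_real t) = T t"
    and FC: "\<And>z. c * cmod z < Re z \<Longrightarrow> cbounded_linear (F z) \<and>
      (\<exists>D. cbounded_linear D \<and>
         ((\<lambda>w. onorm (\<lambda>x. F w x - F z x - cscale (w - z) (D x)) / cmod (w - z)) \<longlongrightarrow> 0) (at z))"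
    using holo_data by blast
  let ?z = "complex_of_real t"
  obtain D where D: "cbounded_linear D"
    and L: "((\<lambda>w. onorm (\<lambda>x. F w x - F ?z x - cscale (w - ?z) (D x)) / cmod (w - ?z)) \<longlongrightarrow> 0) (at ?z)"
    using FC[of ?z] c assms by auto
  have ofr: "filterlim complex_of_real (at ?z) (at t)"
    unfolding filterlim_at
    by (auto intro!: tendsto_eq_intros simp: eventually_at_filter)
  have L2: "((\<lambda>\<tau>. onorm (\<lambda>x. F (of_real \<tau>) x - F ?z x - cscale (of_real \<tau> - ?z) (D x)) / cmod (of_real \<tau> - ?z)) \<longlongrightarrow> 0) (at t)"
    using filterlim_compose[OF L ofr] by (simp add: o_def)
  have "((\<lambda>\<tau>. T \<tau> y) has_vector_derivative D y) (at t)"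
    unfolding has_vector_derivative_def has_derivative_iff_norm
  proof (intro conjI)
    show "bounded_linear (\<lambda>h. h *\<^sub>R D y)" by (rule bounded_linear_scaleR_left)
    show "((\<lambda>\<tau>. norm (T \<tau> y - T t y - (\<tau> - t) *\<^sub>R D y) / norm (\<tau> - t)) \<longlongrightarrow> 0) (at t)"
    proof (rule Lim_null_comparison)
      show "((\<lambda>\<tau>. onorm (\<lambda>x. F (of_real \<tau>) x - F ?z x - cscale (of_real \<tau> - ?z) (D x)) / cmod (of_real \<tau> - ?z) * norm y) \<longlongrightarrow> 0) (at t)"
        using tendsto_mult[OF L2 tendsto_const[of "norm y"]] by simp
      have ev: "\<forall>\<^sub>F \<tau> in at t. \<tau> > 0"
        using order_tendstoD(1)[OF tendsto_ident_at assms] by simp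
      show "\<forall>\<^sub>F \<tau> in at t. norm (norm (T \<tau> y - T t y - (\<tau> - t) *\<^sub>R D y) / norm (\<tau> - t)) \<le>
           onorm (\<lambda>x. F (of_real \<tau>) x - F ?z x - cscale (of_real \<tau> - ?z) (D x)) / cmod (of_real \<tau> - ?z) * norm y"
        using ev
      proof eventually_elim
        case (elim \<tau>)
        have bl: "bounded_linear (\<lambda>x. F (of_real \<tau>) x - F ?z x - cscale (of_real \<tau> - ?z) (D x))"
          using FC[of "of_real \<tau>"] FC[of ?z] c elim assms D by (intro diff_op_bl) auto
        have eq: "T \<tau> y - T t y - (\<tau> - t) *\<^sub>R D y = F (of_real \<tau>) y - F ?z y - cscale (of_real \<tau> - ?z) (D y)"
          using FT elim assms by (simp add: cscale_of_real flip: of_real_diff)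
        have "norm (T \<tau> y - T t y - (\<tau> - t) *\<^sub>R D y) \<le> onorm (\<lambda>x. F (of_real \<tau>) x - F ?z x - cscale (of_real \<tau> - ?z) (D x)) * norm y"
          unfolding eq using onorm[OF bl] by blast
        then show ?case
          by (simp add: divide_right_mono flip: of_real_diff)
      qed
    qed
  qed
  then show ?thesis by blast
qed

lemma L1: assumes "t > 0"
  shows "T t y \<in> DA \<and> ((\<lambda>\<tau>. T \<tau> y) has_vector_derivative (- A (T t y))) (at t)"
proof -
  obtain D where D: "((\<lambda>\<tau>. T \<tau> y) has_vector_derivative D) (at t)" using L1_raw[OF assms] by blast
  have "(quot (T t y) \<longlongrightarrow> D) (at_right 0)"
    using VD_quot[OF D]
  proof (rule Lim_transform_eventually)
    show "\<forall>\<^sub>F h in at_right 0. (1 / h) *\<^sub>R (T (t + h) y - T t y) = quot (T t y) h"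
      using eventually_at_right_less[of 0]
      by eventually_elim (use assms in \<open>simp add: quot_def T_comp add.commute\<close>)
  qed
  from gen_intro[OF this] D show ?thesis by simp
qed

lemma BU: assumes "t \<ge> 0" "T t y = 0" shows "y = 0"
proof (cases "t = 0")
  case True then show ?thesis using assms T0 by simp
next
  case False
  then have t0: "t > 0" using assms by simp
  obtain c F where c: "0 \<le> c" "c < 1" and FT: "\<forall>t>0. F (complex_of_real t) = T t"
    and FC: "\<And>z. c * cmod z < Re z \<Longrightarrow> cbounded_linear (F z) \<and>
      (\<exists>D. cbounded_linear D \<and>
         ((\<lambda>w. onorm (\<lambda>x. F w x - F z x - cscale (w - z) (D x)) / cmod (w - z)) \<longlongrightarrow> 0) (at z))"
    using holo_data by blast
  define C where "C = {z::complex. c * cmod z < Re z}"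
  have zero: "cinner (T s y) w = 0" if s: "s > 0" for s w
  proof -
    let ?g = "\<lambda>z. cinner (F z y) w"
    have hol: "?g holomorphic_on C"
      unfolding holomorphic_on_open[OF C_open[of c, folded C_def]]
    proof
      fix z assume z: "z \<in> C"
      obtain D where D: "cbounded_linear D"
        and L: "((\<lambda>v. onorm (\<lambda>x. F v x - F z x - cscale (v - z) (D x)) / cmod (v - z)) \<longlongrightarrow> 0) (at z)"
        using FC z C_def by blast
      have "DERIV ?g z :> cinner (D y) w"
        unfolding has_field_derivative_iff
      proof (rule LIM_zero_cancel, rule Lim_null_comparison)
        show "((\<lambda>v. onorm (\<lambda>x. F v x - F z x - cscale (v - z) (D x)) / cmod (v - z) * (norm y * norm w)) \<longlongrightarrow> 0) (at z)"
          using tendsto_mult[OF L tendsto_const[of "norm y * norm w"]] by simp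
        have ev: "\<forall>\<^sub>F v in at z. v \<in> C \<and> v \<noteq> z"
          using z C_open[of c, folded C_def] eventually_at_in_open eventually_at_filter
          by (metis (mono_tags, lifting) eventually_at_topological)
        show "\<forall>\<^sub>F v in at z. norm ((?g v - ?g z) / (v - z) - cinner (D y) w) \<le>
           onorm (\<lambda>x. F v x - F z x - cscale (v - z) (D x)) / cmod (v - z) * (norm y * norm w)"
          using ev
        proof eventually_elim
          case (elim v)
          have bl: "bounded_linear (\<lambda>x. F v x - F z x - cscale (v - z) (D x))"
            using FC[of v] FC[of z] elim z D C_def by (intro diff_op_bl) auto
          have "(?g v - ?g z) / (v - z) - cinner (D y) w
              = cinner (F v y - F z y - cscale (v - z) (D y)) w / (v - z)"
            using elim by (simp add: cinner_diff_left cinner_add_left cinner_cscale_left field_simps)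
          also have "norm \<dots> \<le> onorm (\<lambda>x. F v x - F z x - cscale (v - z) (D x)) * norm y * norm w / cmod (v - z)"
          proof -
            have "cmod (cinner (F v y - F z y - cscale (v - z) (D y)) w) \<le> norm (F v y - F z y - cscale (v - z) (D y)) * norm w"
              by (rule cinner_CS)
            also have "\<dots> \<le> onorm (\<lambda>x. F v x - F z x - cscale (v - z) (D x)) * norm y * norm w"
              using onorm[OF bl, of y] by (simp add: mult_right_mono)
            finally show ?thesis by (simp add: norm_divide divide_right_mono)
          qed
          finally show ?case by simp
        qed
      qed
      then show "\<exists>f'. DERIV ?g z :> f'" by blast
    qed
    have zU: "?g z = 0" if zin: "z \<in> complex_of_real ` {t<..}" for z
    proof -
      obtain r where r: "r > t" "z = of_real r" using zin by blast
      have "T r y = T (r - t) (T t y)" using T_comp[of "r - t" t y] r t0 by simp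
      also have "\<dots> = 0" using assms T_zero r by simp
      finally show ?thesis using r FT t0 by simp
    qed
    have "?g (of_real s) = 0"
    proof (rule analytic_continuation[OF hol C_open[of c, folded C_def] convex_connected[OF C_convex[OF c(1), folded C_def]]])
      show "complex_of_real ` {t<..} \<subseteq> C" using c t0 by (auto simp: C_def)
      show "of_real (t+1) \<in> C" using c t0 by (auto simp: C_def)
      show "of_real s \<in> C" using c s by (auto simp: C_def)
      show "complex_of_real (t + 1) islimpt complex_of_real ` {t<..}"
        unfolding islimpt_approachable
      proof (intro allI impI)
        fix e :: real assume e: "e > 0"
        show "\<exists>x'\<in>complex_of_real ` {t<..}. x' \<noteq> complex_of_real (t + 1) \<and> dist x' (complex_of_real (t + 1)) < e"
        proof (rule bexI[of _ "of_real (t + 1 + min 1 e / 2)"])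
          show "complex_of_real (t + 1 + min 1 e / 2) \<in> complex_of_real ` {t<..}"
            using e by (intro imageI) auto
        qed (use e in \<open>auto simp: dist_norm simp flip: of_real_diff\<close>)
      qed
    qed (use zU in auto)
    then show ?thesis using FT s by simp
  qed
  have "\<forall>\<^sub>F s in at_right 0. T s y = 0"
    using eventually_at_right_less[of 0]
  proof eventually_elim
    case (elim s)
    have "cinner (T s y) (T s y) = 0" using zero[OF elim] by blast
    then show ?case by (simp add: cinner_self_norm)
  qed
  then have "((\<lambda>s. T s y) \<longlongrightarrow> 0) (at_right 0)" by (rule tendsto_eventually)
  then show ?thesis using T_at0[of y] tendsto_unique by force
qed

end

lemma rinner_deriv:
  assumes "(a has_vector_derivative a') (at t within S)" "(b has_vector_derivative b') (at t within S)"
  shows "((\<lambda>t. rinner (a t) (b t)) has_real_derivative (rinner (a t) b' + rinner a' (b t))) (at t within S)"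
  unfolding has_real_derivative_iff_has_vector_derivative
  by (rule bounded_bilinear.has_vector_derivative[OF bounded_bilinear_rinner assms])

context sg begin

definition v :: "nat \<Rightarrow> 'a \<Rightarrow> real \<Rightarrow> 'a" where
  "v n x t = ((\<lambda>z. - A z) ^^ n) (T t x)"

lemma v0: "v 0 x t = T t x" by (simp add: v_def)
lemma vSuc: "v (Suc n) x t = - A (v n x t)" by (simp add: v_def)

lemma V: "s > 0 \<Longrightarrow> v n x s \<in> DA \<and> (\<forall>r\<ge>0. v n x (s + r) = T r (v n x s))"
proof (induction n arbitrary: s)
  case 0
  then show ?case using L1[of s x] T_comp[of _ s x] by (simp add: v0 add.commute)
next
  case (Suc n)
  have h: "s/2 > 0" using Suc.prems by simp
  have "v n x s = T (s/2) (v n x (s/2))" using Suc.IH[OF h] by (metis field_sum_of_halves less_eq_real_def h)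
  then have "v (Suc n) x s = - T (s/2) (A (v n x (s/2)))"
    using commute[of "v n x (s/2)" "s/2"] Suc.IH[OF h] h by (simp add: vSuc)
  also have "\<dots> = T (s/2) (- A (v n x (s/2)))" using T_minus h by simp
  finally have inD: "v (Suc n) x s \<in> DA" using L1[OF h] by simp
  have "v (Suc n) x (s + r) = T r (v (Suc n) x s)" if r: "r \<ge> 0" for r
  proof -
    have "v (Suc n) x (s + r) = - A (T r (v n x s))" using Suc.IH[OF Suc.prems] r by (simp add: vSuc)
    also have "\<dots> = - T r (A (v n x s))" using commute[of "v n x s" r] Suc.IH[OF Suc.prems] r by simp
    also have "\<dots> = T r (v (Suc n) x s)" using T_minus r by (simp add: vSuc)
    finally show ?thesis .
  qed
  then show ?case using inD by blast
qed

lemma vDA: "t > 0 \<Longrightarrow> v n x t \<in> DA" using V by blast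

lemma VD: assumes "t > 0" shows "(v n x has_vector_derivative v (Suc n) x t) (at t)"
proof -
  define s where "s = t/2"
  have s: "s > 0" "s < t" using assms by (auto simp: s_def)
  let ?y = "v n x s"
  have d1: "((\<lambda>\<tau>. \<tau> - s) has_vector_derivative 1) (at t)"
    unfolding has_real_derivative_iff_has_vector_derivative[symmetric] by (auto intro!: derivative_eq_intros)
  have d2: "((\<lambda>\<sigma>. T \<sigma> ?y) has_vector_derivative - A (T (t - s) ?y)) (at (t - s))"
    using L1[of "t - s" ?y] s by simp
  have "((\<lambda>\<tau>. T (\<tau> - s) ?y) has_vector_derivative - A (T (t - s) ?y)) (at t)"
    using vector_diff_chain_at[OF d1 d2] by (simp add: o_def)
  moreover have "T (t - s) ?y = v n x t" using V[OF s(1)] s by (metis add.commute diff_add_cancel less_eq_real_def diff_gt_0_iff_gt)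
  ultimately have D: "((\<lambda>\<tau>. T (\<tau> - s) ?y) has_vector_derivative v (Suc n) x t) (at t)"
    by (simp add: vSuc)
  show ?thesis
  proof (rule has_vector_derivative_transform_within_open[OF D, of "{s<..}"])
    fix \<tau> :: real assume "\<tau> \<in> {s<..}"
    then show "T (\<tau> - s) ?y = v n x \<tau>" using V[OF s(1)] by (metis add.commute diff_add_cancel less_eq_real_def diff_gt_0_iff_gt greaterThan_iff)
  qed (use s in auto)
qed

lemma L3: assumes "x \<in> DA" "t \<ge> 0"
  shows "((\<lambda>t. T t x) has_vector_derivative (- T t (A x))) (at t within {0..})"
proof (cases "t = 0")
  case False
  then have t: "t > 0" using assms by simp
  have "((\<lambda>t. T t x) has_vector_derivative (- A (T t x))) (at t)" using L1[OF t] by blast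
  then show ?thesis using commute[OF assms] by (simp add: has_vector_derivative_at_within)
next
  case True
  have "((\<lambda>h. quot x h - (- A x)) \<longlongrightarrow> 0) (at_right 0)"
    using tendsto_diff[OF gen_lim[OF assms(1)] tendsto_const[of "- A x"]] by simp
  then have Z: "((\<lambda>h. norm (quot x h - (- A x))) \<longlongrightarrow> 0) (at_right 0)"
    by (rule tendsto_norm_zero)
  have "((\<lambda>t. T t x) has_vector_derivative (- A x)) (at 0 within {0..})"
    unfolding has_vector_derivative_def has_derivative_iff_norm
  proof (intro conjI)
    show "bounded_linear (\<lambda>h. h *\<^sub>R - A x)" by (rule bounded_linear_scaleR_left)
    show "((\<lambda>y. norm (T y x - T 0 x - (y - 0) *\<^sub>R - A x) / norm (y - 0)) \<longlongrightarrow> 0) (at 0 within {0..})"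
      unfolding at_within_Ici_at_right
      using Z
    proof (rule Lim_transform_eventually)
      show "\<forall>\<^sub>F y in at_right 0. norm (quot x y - - A x) = norm (T y x - T 0 x - (y - 0) *\<^sub>R - A x) / norm (y - 0)"
        using eventually_at_right_less[of 0]
      proof eventually_elim
        case (elim y)
        have "quot x y - - A x = (1/y) *\<^sub>R (T y x - T 0 x - (y - 0) *\<^sub>R - A x)"
          using elim by (simp add: quot_def T0 algebra_simps)
        then show ?case using elim by (simp add: divide_simps)
      qed
    qed
  qed
  then show ?thesis using True by (simp add: T0)
qed

end

lemma norm_deriv:
  fixes u :: "real \<Rightarrow> 'a::complex_hilbert"
  assumes "(u has_vector_derivative u') (at t within S)" "u t \<noteq> 0"
  shows "((\<lambda>t. norm (u t)) has_real_derivative (rinner u' (u t) / norm (u t))) (at t within S)"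
proof -
  have eq: "(\<lambda>t. norm (u t)) = (\<lambda>t. sqrt (rinner (u t) (u t)))"
    by (simp add: rinner_self)
  have pos: "0 < rinner (u t) (u t)" using assms(2) by (simp add: rinner_self)
  have "((\<lambda>t. sqrt (rinner (u t) (u t))) has_real_derivative
      inverse (sqrt (rinner (u t) (u t))) / 2 * (rinner (u t) u' + rinner u' (u t))) (at t within S)"
    by (rule DERIV_chain2[OF DERIV_real_sqrt[OF pos] rinner_deriv[OF assms(1) assms(1)]])
  moreover have "inverse (sqrt (rinner (u t) (u t))) / 2 * (rinner (u t) u' + rinner u' (u t)) = rinner u' (u t) / norm (u t)"
    by (simp add: rinner_self rinner_commute[of "u t" u'] field_simps)
  ultimately show ?thesis unfolding eq by simp
qed

context sg begin

lemma Tne: "x \<noteq> 0 \<Longrightarrow> t \<ge> 0 \<Longrightarrow> T t x \<noteq> 0"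
  using BU by blast

lemma v0f: "v 0 x = (\<lambda>t. T t x)" by (simp add: v0 fun_eq_iff)

lemma hD: assumes "x \<noteq> 0" "t > 0"
  shows "((\<lambda>t. norm (T t x)) has_real_derivative (rinner (v 1 x t) (T t x) / norm (T t x))) (at t)"
  using norm_deriv[OF VD[OF assms(2), of 0 x]] Tne[OF assms(1), of t] assms(2) by (simp add: v0f)

inductive Kp :: "'a \<Rightarrow> (real \<Rightarrow> real) \<Rightarrow> bool" for x where
  Kh: "Kp x (\<lambda>t. norm (T t x))"
| Ki: "Kp x (\<lambda>t. 1 / norm (T t x))"
| Kr: "Kp x (\<lambda>t. rinner (v i x t) (v j x t))"
| Kc: "Kp x (\<lambda>t. c)"
| Ka: "Kp x f \<Longrightarrow> Kp x g \<Longrightarrow> Kp x (\<lambda>t. f t + g t)"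
| Km: "Kp x f \<Longrightarrow> Kp x g \<Longrightarrow> Kp x (\<lambda>t. f t * g t)"

lemma Kderiv: assumes "x \<noteq> 0" "Kp x f"
  shows "\<exists>g. Kp x g \<and> (\<forall>t>0. (f has_real_derivative g t) (at t))"
  using assms(2)
proof induction
  case Kh
  show ?case
  proof (intro exI conjI allI impI)
    show "Kp x (\<lambda>t. rinner (v 1 x t) (v 0 x t) * (1 / norm (T t x)))"
      by (intro Kp.Km Kp.Kr Kp.Ki)
    fix t :: real assume t: "t > 0"
    show "((\<lambda>t. norm (T t x)) has_real_derivative rinner (v 1 x t) (v 0 x t) * (1 / norm (T t x))) (at t)"
      using hD[OF assms(1) t] by (simp add: v0)
  qed
next
  case Ki
  show ?case
  proof (intro exI conjI allI impI)
    show "Kp x (\<lambda>t. (-1) * rinner (v 1 x t) (v 0 x t) * (1 / norm (T t x)) * (1 / norm (T t x)) * (1 / norm (T t x)))"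
      by (intro Kp.Km Kp.Kr Kp.Ki Kp.Kc)
    fix t :: real assume t: "t > 0"
    have ne: "norm (T t x) \<noteq> 0" using Tne[OF assms(1)] t by simp
    have "((\<lambda>t. 1 / norm (T t x)) has_real_derivative
        (0 * norm (T t x) - 1 * (rinner (v 1 x t) (T t x) / norm (T t x))) / (norm (T t x) * norm (T t x))) (at t)"
      by (rule DERIV_divide[OF DERIV_const hD[OF assms(1) t] ne])
    then show "((\<lambda>t. 1 / norm (T t x)) has_real_derivative (-1) * rinner (v 1 x t) (v 0 x t) * (1 / norm (T t x)) * (1 / norm (T t x)) * (1 / norm (T t x))) (at t)"
      using ne by (simp add: v0 field_simps)
  qed
next
  case (Kr i j)
  show ?case
  proof (intro exI conjI allI impI)
    show "Kp x (\<lambda>t. rinner (v i x t) (v (Suc j) x t) + rinner (v (Suc i) x t) (v j x t))"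
      by (intro Kp.Ka Kp.Kr)
    fix t :: real assume t: "t > 0"
    show "((\<lambda>t. rinner (v i x t) (v j x t)) has_real_derivative rinner (v i x t) (v (Suc j) x t) + rinner (v (Suc i) x t) (v j x t)) (at t)"
      by (rule rinner_deriv[OF VD[OF t] VD[OF t]])
  qed
next
  case (Kc c)
  show ?case
    by (intro exI[of _ "\<lambda>t. 0"] conjI allI impI Kp.Kc DERIV_const)
next
  case (Ka f g)
  then obtain f' g' where "Kp x f'" "\<forall>t>0. (f has_real_derivative f' t) (at t)"
    "Kp x g'" "\<forall>t>0. (g has_real_derivative g' t) (at t)" by blast
  then show ?case
    by (intro exI[of _ "\<lambda>t. f' t + g' t"] conjI allI impI Kp.Ka DERIV_add) auto
next
  case (Km f g)
  then obtain f' g' where "Kp x f" "Kp x g" "Kp x f'" "\<forall>t>0. (f has_real_derivative f' t) (at t)"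
    "Kp x g'" "\<forall>t>0. (g has_real_derivative g' t) (at t)" by blast
  then show ?case
    by (intro exI[of _ "\<lambda>t. f' t * g t + g' t * f t"] conjI allI impI Kp.Ka Kp.Km DERIV_mult) auto
qed

lemma Kiter: assumes "x \<noteq> 0" "Kp x f"
  shows "\<exists>g. Kp x g \<and> (\<forall>t>0. (deriv ^^ n) f t = g t)"
proof (induction n)
  case 0
  then show ?case using assms by auto
next
  case (Suc n)
  then obtain g where g: "Kp x g" "\<forall>t>0. (deriv ^^ n) f t = g t" by blast
  obtain g' where g': "Kp x g'" "\<forall>t>0. (g has_real_derivative g' t) (at t)"
    using Kderiv[OF assms(1) g(1)] by blast
  have "(deriv ^^ Suc n) f t = g' t" if t: "t > 0" for t
  proof -
    have "((deriv ^^ n) f has_real_derivative g' t) (at t)"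
      by (rule has_field_derivative_transform_within_open[OF g'(2)[rule_format, OF t], of "{0<..}"])
         (use g(2) t in auto)
    then show ?thesis by (simp add: DERIV_imp_deriv)
  qed
  then show ?case using g'(1) by blast
qed

lemma Ksmooth: assumes "x \<noteq> 0" "Kp x f" "t > 0"
  shows "(deriv ^^ n) f differentiable (at t)"
proof -
  obtain g where g: "Kp x g" "\<forall>t>0. (deriv ^^ n) f t = g t" using Kiter[OF assms(1,2)] by blast
  obtain g' where g': "Kp x g'" "\<forall>t>0. (g has_real_derivative g' t) (at t)"
    using Kderiv[OF assms(1) g(1)] by blast
  have "((deriv ^^ n) f has_real_derivative g' t) (at t)"
    by (rule has_field_derivative_transform_within_open[OF g'(2)[rule_format, OF assms(3)], of "{0<..}"])
       (use g(2) assms(3) in auto)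
  then show ?thesis unfolding has_field_derivative_def by (rule differentiableI)
qed

lemma h_smooth: assumes "x \<noteq> 0" "t > 0"
  shows "(deriv ^^ n) (\<lambda>t. norm (T t x)) differentiable (at t)"
  by (rule Ksmooth[OF assms(1) Kh assms(2)])

end

lemma powr_from_log:
  fixes hr hs ht u :: real
  assumes "hr > 0" "hs > 0" "ht > 0" "ln hs \<le> (1 - u) * ln hr + u * ln ht"
  shows "hs \<le> hr powr (1 - u) * ht powr u"
proof -
  have "hs = exp (ln hs)" using assms by simp
  also have "\<dots> \<le> exp ((1 - u) * ln hr + u * ln ht)" using assms(4) by simp
  also have "\<dots> = hr powr (1 - u) * ht powr u" using assms by (simp add: powr_def exp_add)
  finally show ?thesis .
qed

context sg begin

definition condI :: bool where
  "condI \<longleftrightarrow> (\<forall>x. x \<in> DA \<and> A x \<in> DA \<and> norm x = 1 \<longrightarrow>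
          2 * (Re (cinner (A x) x))\<^sup>2 \<le> Re (cinner (A (A x)) x) + (norm (A x))\<^sup>2)"

definition condII :: bool where
  "condII \<longleftrightarrow> (\<forall>u0. u0 \<noteq> 0 \<longrightarrow> (\<forall>r s t. 0 \<le> r \<and> r < s \<and> s < t \<longrightarrow>
          norm (T s u0) \<le> norm (T r u0) powr ((t - s) / (t - r)) * norm (T t u0) powr ((s - r) / (t - r))))"

lemma VD0: "t > 0 \<Longrightarrow> (v 0 x has_vector_derivative v 1 x t) (at t)"
  using VD[of t 0 x] by simp
lemma VD1: "t > 0 \<Longrightarrow> (v 1 x has_vector_derivative v 2 x t) (at t)"
  using VD[of t 1 x] by (simp add: numeral_2_eq_2)

lemma A_v: "t > 0 \<Longrightarrow> A (v n x t) = - v (Suc n) x t" by (simp add: vSuc)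

lemma NI: assumes I: condI and x: "x \<noteq> 0" and t: "t > 0"
  shows "2 * (rinner (v 1 x t) (v 0 x t))\<^sup>2 \<le>
     (rinner (v 2 x t) (v 0 x t) + rinner (v 1 x t) (v 1 x t)) * (norm (v 0 x t))\<^sup>2"
proof -
  let ?u = "v 0 x t"
  have un: "?u \<noteq> 0" using Tne[OF x, of t] t by (simp add: v0)
  define c where "c = 1 / norm ?u"
  have c: "c > 0" using un by (simp add: c_def)
  define y where "y = c *\<^sub>R ?u"
  have uD: "?u \<in> DA" using vDA t by blast
  have Au: "A ?u = - v 1 x t" using A_v t by simp
  have AuD: "A ?u \<in> DA" using Au DA_minus vDA t by (metis numeral_One)
  have AAu: "A (A ?u) = v 2 x t"
    using Au DA_minus[OF vDA[OF t, of 1 x]] A_v[OF t, of 1 x] by (simp add: numeral_2_eq_2)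
  have yD: "y \<in> DA" and Ay: "A y = c *\<^sub>R A ?u" using DA_scaleR[OF uD] by (auto simp: y_def)
  have AyD: "A y \<in> DA" and AAy: "A (A y) = c *\<^sub>R A (A ?u)" using DA_scaleR[OF AuD] Ay by auto
  have ny: "norm y = 1" using un by (simp add: y_def c_def)
  have "2 * (Re (cinner (A y) y))\<^sup>2 \<le> Re (cinner (A (A y)) y) + (norm (A y))\<^sup>2"
    using I yD AyD ny unfolding condI_def by blast
  moreover have "Re (cinner (A y) y) = - (c * c * rinner (v 1 x t) ?u)"
    unfolding Ay unfolding y_def rinner_def[symmetric] Au by (simp add: rinner_simps)
  moreover have "Re (cinner (A (A y)) y) = c * c * rinner (v 2 x t) ?u"
    unfolding AAy unfolding y_def rinner_def[symmetric] AAu by (simp add: rinner_simps)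
  moreover have "(norm (A y))\<^sup>2 = c * c * rinner (v 1 x t) (v 1 x t)"
    unfolding Ay Au using c by (simp add: rinner_self power2_eq_square)
  ultimately have "2 * (c * c * rinner (v 1 x t) ?u)\<^sup>2 \<le> c * c * rinner (v 2 x t) ?u + c * c * rinner (v 1 x t) (v 1 x t)"
    by simp
  then have "2 * (c * c)\<^sup>2 * (rinner (v 1 x t) ?u)\<^sup>2 \<le> (c * c) * (rinner (v 2 x t) ?u + rinner (v 1 x t) (v 1 x t))"
    by (simp add: power_mult_distrib algebra_simps)
  then have "(c * c) * (2 * (c * c) * (rinner (v 1 x t) ?u)\<^sup>2) \<le> (c * c) * (rinner (v 2 x t) ?u + rinner (v 1 x t) (v 1 x t))"
    by (simp add: power2_eq_square algebra_simps)
  then have "2 * (c * c) * (rinner (v 1 x t) ?u)\<^sup>2 \<le> rinner (v 2 x t) ?u + rinner (v 1 x t) (v 1 x t)"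
    using c by (simp add: mult_le_cancel_left_pos)
  then have "(norm ?u)\<^sup>2 * (2 * (c * c) * (rinner (v 1 x t) ?u)\<^sup>2) \<le> (norm ?u)\<^sup>2 * (rinner (v 2 x t) ?u + rinner (v 1 x t) (v 1 x t))"
    by (simp add: mult_left_mono)
  moreover have F: "(norm ?u)\<^sup>2 * (c * c) = 1" using un by (simp add: c_def power2_eq_square)
  ultimately have G: "(norm ?u)\<^sup>2 * (2 * (c * c) * (rinner (v 1 x t) ?u)\<^sup>2) \<le> (norm ?u)\<^sup>2 * (rinner (v 2 x t) ?u + rinner (v 1 x t) (v 1 x t))"
    by blast
  have "2 * (rinner (v 1 x t) ?u)\<^sup>2 = 2 * (rinner (v 1 x t) ?u)\<^sup>2 * ((norm ?u)\<^sup>2 * (c * c))"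
    by (simp only: F mult_1_right)
  also have "\<dots> = (norm ?u)\<^sup>2 * (2 * (c * c) * (rinner (v 1 x t) ?u)\<^sup>2)" by (simp only: mult_ac)
  also have "\<dots> \<le> (norm ?u)\<^sup>2 * (rinner (v 2 x t) ?u + rinner (v 1 x t) (v 1 x t))" by (rule G)
  finally show ?thesis by (simp only: mult_ac)
qed

lemma logconvex_pos:
  assumes I: condI and x: "x \<noteq> 0"
  shows "convex_on {0<..} (\<lambda>t. ln (norm (T t x)))"
proof -
  define p where "p t = rinner (v 1 x t) (v 0 x t) / rinner (v 0 x t) (v 0 x t)" for t
  have pos: "rinner (v 0 x t) (v 0 x t) > 0" if "t > 0" for t
    using Tne[OF x, of t] that by (simp add: v0 rinner_self)
  have dpsi: "((\<lambda>t. ln (norm (T t x))) has_real_derivative p t) (at t)" if t: "t > 0" for t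
  proof -
    have n: "norm (T t x) > 0" using Tne[OF x, of t] t by simp
    have "((\<lambda>t. ln (norm (T t x))) has_real_derivative inverse (norm (T t x)) * (rinner (v 1 x t) (T t x) / norm (T t x))) (at t)"
      by (rule DERIV_chain2[OF DERIV_ln[OF n] hD[OF x t]])
    then show ?thesis by (simp add: p_def v0 rinner_self power2_eq_square field_simps)
  qed
  have dp: "\<exists>y. (p has_real_derivative y) (at t) \<and> 0 \<le> y" if t: "t > 0" for t
  proof -
    let ?N = "rinner (v 1 x t) (v 0 x t)" and ?D = "rinner (v 0 x t) (v 0 x t)"
    have "(p has_real_derivative
        ((rinner (v 1 x t) (v 1 x t) + rinner (v 2 x t) (v 0 x t)) * ?D - ?N * (rinner (v 0 x t) (v 1 x t) + rinner (v 1 x t) (v 0 x t))) / (?D * ?D)) (at t)"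
      unfolding p_def[abs_def]
      using DERIV_divide[OF rinner_deriv[OF VD1[OF t] VD0[OF t]] rinner_deriv[OF VD0[OF t] VD0[OF t]]] pos[OF t]
      by simp
    moreover have "0 \<le> ((rinner (v 1 x t) (v 1 x t) + rinner (v 2 x t) (v 0 x t)) * ?D - ?N * (rinner (v 0 x t) (v 1 x t) + rinner (v 1 x t) (v 0 x t))) / (?D * ?D)"
    proof -
      have "2 * ?N\<^sup>2 \<le> (rinner (v 2 x t) (v 0 x t) + rinner (v 1 x t) (v 1 x t)) * ?D"
        using NI[OF I x t] by (simp add: rinner_self)
      moreover have "rinner (v 0 x t) (v 1 x t) = ?N" by (rule rinner_commute)
      ultimately have "0 \<le> (rinner (v 1 x t) (v 1 x t) + rinner (v 2 x t) (v 0 x t)) * ?D - ?N * (rinner (v 0 x t) (v 1 x t) + rinner (v 1 x t) (v 0 x t))"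
        by (simp only: power2_eq_square) (simp add: algebra_simps)
      then show ?thesis by simp
    qed
    ultimately show ?thesis by blast
  qed
  show ?thesis
  proof (rule convex_on_realI[of _ _ p])
    show "connected {0::real<..}" by simp
    show "((\<lambda>t. ln (norm (T t x))) has_real_derivative p t) (at t)" if "t \<in> {0<..}" for t
      using dpsi that by simp
    show "p a \<le> p b" if ab: "a \<in> {0<..}" "b \<in> {0<..}" "a \<le> b" for a b
    proof (rule DERIV_nonneg_imp_increasing_open[OF \<open>a \<le> b\<close>])
      show "\<exists>y. (p has_real_derivative y) (at x) \<and> 0 \<le> y" if "a < x" "x < b" for x
        using dp that \<open>a \<in> {0<..}\<close> by simp
      show "continuous_on {a..b} p"
      proof (rule DERIV_atLeastAtMost_imp_continuous_on)
        fix x assume "a \<le> x" "x \<le> b"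
        then have "x > 0" using ab by simp
        then show "\<exists>y. (p has_real_derivative y) (at x)" using dp by blast
      qed
    qed
  qed
qed

lemma logconvex_ineq:
  assumes I: condI and x: "x \<noteq> 0" and rst: "0 \<le> r" "r < s" "s < t"
  shows "ln (norm (T s x)) \<le> (t - s) / (t - r) * ln (norm (T r x)) + (s - r) / (t - r) * ln (norm (T t x))"
proof -
  let ?psi = "\<lambda>t. ln (norm (T t x))"
  have C: "convex_on {0<..} ?psi" by (rule logconvex_pos[OF I x])
  have pos_case: "?psi s \<le> (t - s) / (t - r) * ?psi r + (s - r) / (t - r) * ?psi t" if r: "r > 0" "r < s" for r
  proof -
    define u where "u = (s - r) / (t - r)"
    have u: "0 \<le> u" "u \<le> 1" using r rst by (auto simp: u_def field_simps)
    have "?psi ((1 - u) *\<^sub>R r + u *\<^sub>R t) \<le> (1 - u) * ?psi r + u * ?psi t"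
      using convex_onD[OF C u] r rst by simp
    moreover have "(1 - u) *\<^sub>R r + u *\<^sub>R t = s"
    proof -
      have "(1 - u) *\<^sub>R r + u *\<^sub>R t = r + u * (t - r)" by (simp add: algebra_simps)
      also have "u * (t - r) = s - r" using r rst(3) by (simp add: u_def)
      finally show ?thesis by simp
    qed
    moreover have "1 - u = (t - s) / (t - r)" using r rst by (simp add: u_def field_simps)
    ultimately show ?thesis by (simp add: u_def)
  qed
  show ?thesis
  proof (cases "r = 0")
    case False
    then show ?thesis using pos_case rst by simp
  next
    case True
    have nx: "norm x > 0" using x by simp
    have lim: "((\<lambda>r. (t - s) / (t - r) * ?psi r + (s - r) / (t - r) * ?psi t) \<longlongrightarrow>
        (t - s) / (t - 0) * ln (norm x) + (s - 0) / (t - 0) * ?psi t) (at_right 0)"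
      using rst nx by (intro tendsto_intros T_at0) auto
    have ev: "\<forall>\<^sub>F r in at_right 0. ?psi s \<le> (t - s) / (t - r) * ?psi r + (s - r) / (t - r) * ?psi t"
    proof -
      have "\<forall>\<^sub>F r in at_right 0. r < s"
        using rst True by (intro order_tendstoD(2)[OF tendsto_ident_at]) (auto simp: at_within_def)
      then show ?thesis using eventually_at_right_less[of 0]
        by eventually_elim (use pos_case in auto)
    qed
    have "?psi s \<le> (t - s) / (t - 0) * ln (norm x) + (s - 0) / (t - 0) * ?psi t"
      by (rule tendsto_lowerbound[OF lim ev]) simp
    then show ?thesis using True by (simp add: T0)
  qed
qed

lemma I_imp_II: assumes condI shows condII
  unfolding condII_def
proof (intro allI impI, elim conjE)
  fix x :: 'a and r s t :: real
  assume x: "x \<noteq> 0" and rst: "0 \<le> r" "r < s" "s < t"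
  have e: "(t - s) / (t - r) = 1 - (s - r) / (t - r)" using rst by (simp add: field_simps)
  show "norm (T s x) \<le> norm (T r x) powr ((t - s) / (t - r)) * norm (T t x) powr ((s - r) / (t - r))"
    unfolding e
    by (rule powr_from_log) (use Tne[OF x] rst logconvex_ineq[OF assms x rst] e in auto)
qed

end

context sg begin

lemma taylor2:
  assumes xD: "x \<in> DA" and AxD: "A x \<in> DA"
  shows "((\<lambda>s. (1 / s\<^sup>2) *\<^sub>R (T s x - (x - s *\<^sub>R A x + (s\<^sup>2 / 2) *\<^sub>R A (A x)))) \<longlongrightarrow> 0) (at_right 0)"
proof -
  let ?w1 = "A x" and ?w2 = "A (A x)"
  define e where "e \<tau> = T \<tau> x - (x - \<tau> *\<^sub>R ?w1 + (\<tau>\<^sup>2 / 2) *\<^sub>R ?w2)" for \<tau>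
  have e0: "e 0 = 0" by (simp add: e_def T0)
  have de: "(e has_vector_derivative (- T \<tau> ?w1 - (- ?w1 + \<tau> *\<^sub>R ?w2))) (at \<tau> within {0..})"
    if "\<tau> \<ge> 0" for \<tau>
  proof -
    have P: "((\<lambda>\<tau>. x - \<tau> *\<^sub>R ?w1 + (\<tau>\<^sup>2 / 2) *\<^sub>R ?w2) has_vector_derivative (- ?w1 + \<tau> *\<^sub>R ?w2)) (at \<tau> within {0..})"
      by (auto intro!: derivative_eq_intros simp: algebra_simps)
    show ?thesis unfolding e_def[abs_def]
      by (rule has_vector_derivative_diff[OF L3[OF xD that] P])
  qed
  show ?thesis
    unfolding tendsto_iff
  proof (intro allI impI)
    fix \<epsilon> :: real assume \<epsilon>: "\<epsilon> > 0"
    have "\<forall>\<^sub>F \<tau> in at_right 0. dist (quot ?w1 \<tau>) (- ?w2) < \<epsilon> / 2"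
    proof -
      have "\<epsilon> / 2 > 0" using \<epsilon> by simp
      then show ?thesis using gen_lim[OF AxD] unfolding tendsto_iff by blast
    qed
    then obtain \<delta> where \<delta>: "\<delta> > 0" and B: "\<And>\<tau>. 0 < \<tau> \<Longrightarrow> \<tau> < \<delta> \<Longrightarrow> norm (quot ?w1 \<tau> + ?w2) < \<epsilon> / 2"
      unfolding eventually_at_right_field dist_norm by auto
    show "\<forall>\<^sub>F s in at_right 0. dist ((1 / s\<^sup>2) *\<^sub>R (T s x - (x - s *\<^sub>R ?w1 + (s\<^sup>2 / 2) *\<^sub>R ?w2))) 0 < \<epsilon>"
      unfolding eventually_at_right_field
    proof (intro exI[of _ \<delta>] conjI allI impI)
      show "\<delta> > 0" by fact
      fix s :: real assume s: "0 < s" "s < \<delta>"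
      have bound: "norm (- T \<tau> ?w1 - (- ?w1 + \<tau> *\<^sub>R ?w2)) \<le> s * (\<epsilon> / 2)" if \<tau>: "\<tau> \<in> {0..s}" for \<tau>
      proof (cases "\<tau> = 0")
        case True then show ?thesis using s \<epsilon> by (simp add: T0)
      next
        case False
        then have t0: "\<tau> > 0" using \<tau> by simp
        have "- T \<tau> ?w1 - (- ?w1 + \<tau> *\<^sub>R ?w2) = - (\<tau> *\<^sub>R (quot ?w1 \<tau> + ?w2))"
          using t0 by (simp add: quot_def algebra_simps)
        then have "norm (- T \<tau> ?w1 - (- ?w1 + \<tau> *\<^sub>R ?w2)) = \<tau> * norm (quot ?w1 \<tau> + ?w2)"
          using t0 by simp
        also have "\<dots> \<le> s * (\<epsilon> / 2)"
          using B[OF t0] \<tau> s t0 by (intro mult_mono) auto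
        finally show ?thesis .
      qed
      have "norm (e s - e 0) \<le> s * (\<epsilon> / 2) * norm (s - 0)"
      proof (rule differentiable_bound[of "{0..s}" e "\<lambda>\<tau> h. h *\<^sub>R (- T \<tau> ?w1 - (- ?w1 + \<tau> *\<^sub>R ?w2))"])
        show "convex {0..s}" by simp
        show "(e has_derivative (\<lambda>h. h *\<^sub>R (- T \<tau> ?w1 - (- ?w1 + \<tau> *\<^sub>R ?w2)))) (at \<tau> within {0..s})"
          if "\<tau> \<in> {0..s}" for \<tau>
          using has_vector_derivative_within_subset[OF de[of \<tau>], of "{0..s}"] that
          unfolding has_vector_derivative_def by auto
        show "onorm (\<lambda>h. h *\<^sub>R (- T \<tau> ?w1 - (- ?w1 + \<tau> *\<^sub>R ?w2))) \<le> s * (\<epsilon> / 2)"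
          if "\<tau> \<in> {0..s}" for \<tau>
        proof (rule onorm_bound)
          show "0 \<le> s * (\<epsilon> / 2)" using s \<epsilon> by simp
          fix h :: real
          have "norm (h *\<^sub>R (- T \<tau> ?w1 - (- ?w1 + \<tau> *\<^sub>R ?w2))) = \<bar>h\<bar> * norm (- T \<tau> ?w1 - (- ?w1 + \<tau> *\<^sub>R ?w2))"
            by simp
          also have "\<dots> \<le> \<bar>h\<bar> * (s * (\<epsilon> / 2))" by (rule mult_left_mono[OF bound[OF that]]) simp
          finally show "norm (h *\<^sub>R (- T \<tau> ?w1 - (- ?w1 + \<tau> *\<^sub>R ?w2))) \<le> s * (\<epsilon> / 2) * norm h"
            by (simp add: mult.commute)
        qed
      qed (use s in auto)
      then have "norm (e s) \<le> s\<^sup>2 * (\<epsilon> / 2)" using s by (simp add: e0 power2_eq_square algebra_simps)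
      then have "norm ((1 / s\<^sup>2) *\<^sub>R e s) \<le> \<epsilon> / 2" using s by (simp add: field_simps mult.commute mult.left_commute)
      then show "dist ((1 / s\<^sup>2) *\<^sub>R (T s x - (x - s *\<^sub>R ?w1 + (s\<^sup>2 / 2) *\<^sub>R ?w2))) 0 < \<epsilon>"
      proof -
        have "dist ((1 / s\<^sup>2) *\<^sub>R (T s x - (x - s *\<^sub>R ?w1 + (s\<^sup>2 / 2) *\<^sub>R ?w2))) 0 = norm ((1 / s\<^sup>2) *\<^sub>R e s)"
          by (simp add: e_def dist_norm)
        then show ?thesis using \<open>norm ((1 / s\<^sup>2) *\<^sub>R e s) \<le> \<epsilon> / 2\<close> \<epsilon> by linarith
      qed
    qed
  qed
qed

end

context sg begin

lemma II_imp_I: assumes II: condII shows condI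
  unfolding condI_def
proof (intro allI impI, elim conjE)
  fix x assume xD: "x \<in> DA" and AxD: "A x \<in> DA" and nx: "norm x = 1"
  let ?w1 = "A x" and ?w2 = "A (A x)"
  define E where "E s = (1 / s\<^sup>2) *\<^sub>R (T s x - (x - s *\<^sub>R ?w1 + (s\<^sup>2 / 2) *\<^sub>R ?w2))" for s
  define p where "p s = x - s *\<^sub>R ?w1 + (s\<^sup>2 / 2) *\<^sub>R ?w2" for s
  define \<phi> where "\<phi> s = (norm (T s x))\<^sup>2" for s
  define a where "a = - 2 * rinner ?w1 x"
  define b where "b = rinner ?w1 ?w1 + rinner ?w2 x"
  define q where "q s = (\<phi> s - 1 - a * s - b * s\<^sup>2) / s\<^sup>2" for s
  have E0: "(E \<longlongrightarrow> 0) (at_right 0)" unfolding E_def[abs_def] by (rule taylor2[OF xD AxD])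
  have Tsx: "T s x = p s + s\<^sup>2 *\<^sub>R E s" if "s > 0" for s
    using that by (simp add: E_def p_def)
  have xx: "rinner x x = 1" using nx by (simp add: rinner_self)
  have pp: "rinner (p s) (p s) = 1 + a * s + b * s\<^sup>2 - s^3 * rinner ?w1 ?w2 + s^4 / 4 * rinner ?w2 ?w2" for s
  proof -
    have c1: "rinner x ?w1 = rinner ?w1 x" by (rule rinner_commute)
    have c2: "rinner x ?w2 = rinner ?w2 x" by (rule rinner_commute)
    have c3: "rinner ?w2 ?w1 = rinner ?w1 ?w2" by (rule rinner_commute)
    show ?thesis unfolding p_def a_def b_def
      by (simp add: rinner_simps c1 c2 c3 xx power2_eq_square power3_eq_cube power4_eq_xxxx field_simps)
  qed
  have qeq: "q s = - s * rinner ?w1 ?w2 + s\<^sup>2 / 4 * rinner ?w2 ?w2 + 2 * rinner (p s) (E s) + s\<^sup>2 * rinner (E s) (E s)"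
    if s: "s > 0" for s
  proof -
    have "\<phi> s = rinner (p s + s\<^sup>2 *\<^sub>R E s) (p s + s\<^sup>2 *\<^sub>R E s)"
      unfolding \<phi>_def Tsx[OF s] by (simp add: rinner_self)
    also have "\<dots> = rinner (p s) (p s) + 2 * s\<^sup>2 * rinner (p s) (E s) + s\<^sup>2 * s\<^sup>2 * rinner (E s) (E s)"
      by (simp add: rinner_simps rinner_commute[of "E s" "p s"] algebra_simps)
    finally have "\<phi> s = \<dots>" .
    then show ?thesis unfolding q_def pp using s
      by (simp add: field_simps power2_eq_square power3_eq_cube power4_eq_xxxx)
  qed
  have pcont: "(p \<longlongrightarrow> x) (at_right 0)"
    unfolding p_def[abs_def] by (auto intro!: tendsto_eq_intros)
  have q0: "(q \<longlongrightarrow> 0) (at_right 0)"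
  proof -
    have "((\<lambda>s. - s * rinner ?w1 ?w2 + s\<^sup>2 / 4 * rinner ?w2 ?w2 + 2 * rinner (p s) (E s) + s\<^sup>2 * rinner (E s) (E s)) \<longlongrightarrow>
        - 0 * rinner ?w1 ?w2 + 0\<^sup>2 / 4 * rinner ?w2 ?w2 + 2 * rinner x 0 + 0\<^sup>2 * rinner 0 0) (at_right 0)"
      using bounded_bilinear.tendsto[OF bounded_bilinear_rinner pcont E0]
        bounded_bilinear.tendsto[OF bounded_bilinear_rinner E0 E0]
      by (intro tendsto_intros) auto
    then have "((\<lambda>s. - s * rinner ?w1 ?w2 + s\<^sup>2 / 4 * rinner ?w2 ?w2 + 2 * rinner (p s) (E s) + s\<^sup>2 * rinner (E s) (E s)) \<longlongrightarrow> 0) (at_right 0)"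
      by simp
    then show ?thesis
      by (rule Lim_transform_eventually)
         (use eventually_at_right_less[of 0] in \<open>eventually_elim, simp add: qeq\<close>)
  qed
  have f2: "filterlim (\<lambda>s::real. 2 * s) (at_right 0) (at_right 0)"
    unfolding filterlim_at
    by (auto intro!: tendsto_eq_intros eventually_mono[OF eventually_at_right_less[of 0]])
  have q20: "((\<lambda>s. q (2 * s)) \<longlongrightarrow> 0) (at_right 0)"
    using filterlim_compose[OF q0 f2] by simp
  have phi_q: "\<phi> s = 1 + a * s + b * s\<^sup>2 + s\<^sup>2 * q s" if "s > 0" for s
    using that by (simp add: q_def field_simps)
  have Qeq: "(\<phi> (2 * s) - (\<phi> s)\<^sup>2) / s\<^sup>2 = 2 * b + 4 * q (2 * s) - 2 * q s - (a + b * s + s * q s)\<^sup>2"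
    if s: "s > 0" for s
  proof -
    have s2: "2 * s > 0" using s by simp
    show ?thesis unfolding phi_q[OF s] phi_q[OF s2] using s
      by (simp add: field_simps power2_eq_square)
  qed
  have Qnn: "0 \<le> (\<phi> (2 * s) - (\<phi> s)\<^sup>2) / s\<^sup>2" if s: "s > 0" for s
  proof -
    have x0: "x \<noteq> 0" using nx by auto
    have "norm (T s x) \<le> norm (T 0 x) powr ((2 * s - s) / (2 * s - 0)) * norm (T (2 * s) x) powr ((s - 0) / (2 * s - 0))"
      using II x0 s unfolding condII_def by (metis diff_gt_0_iff_gt less_add_same_cancel1 mult_2 order_refl)
    also have "\<dots> = sqrt (norm (T (2 * s) x))"
      using s nx by (simp add: T0 powr_half_sqrt)
    finally have "norm (T s x) \<le> sqrt (norm (T (2 * s) x))" .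
    then have "(norm (T s x))\<^sup>2 \<le> norm (T (2 * s) x)"
      by (metis norm_ge_zero power_mono real_sqrt_pow2)
    then have "((norm (T s x))\<^sup>2)\<^sup>2 \<le> (norm (T (2 * s) x))\<^sup>2"
      by (rule power_mono) simp
    then show ?thesis by (simp add: \<phi>_def)
  qed
  have lim: "((\<lambda>s. 2 * b + 4 * q (2 * s) - 2 * q s - (a + b * s + s * q s)\<^sup>2) \<longlongrightarrow> 2 * b + 4 * 0 - 2 * 0 - (a + b * 0 + 0 * 0)\<^sup>2) (at_right 0)"
    by (intro tendsto_intros q0 q20)
  have "0 \<le> 2 * b + 4 * 0 - 2 * 0 - (a + b * 0 + 0 * 0)\<^sup>2"
  proof (rule tendsto_lowerbound[OF lim])
    show "\<forall>\<^sub>F s in at_right 0. 0 \<le> 2 * b + 4 * q (2 * s) - 2 * q s - (a + b * s + s * q s)\<^sup>2"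
      using eventually_at_right_less[of 0] by eventually_elim (use Qnn Qeq in metis)
  qed simp
  then have "2 * (rinner ?w1 x)\<^sup>2 \<le> rinner ?w2 x + rinner ?w1 ?w1"
    by (simp add: a_def b_def power2_eq_square)
  then show "2 * (Re (cinner (A x) x))\<^sup>2 \<le> Re (cinner (A (A x)) x) + (norm (A x))\<^sup>2"
    by (simp add: rinner_def[symmetric] rinner_self)
qed

end

lemma exp_strict: "x \<noteq> 0 \<Longrightarrow> 1 + x < exp (x::real)"
proof -
  assume x: "x \<noteq> 0"
  show ?thesis
  proof (cases "1 + x/2 \<ge> 0")
    case True
    have "0 < x * x" using x by (cases "x > 0") (auto simp: mult_neg_neg)
    then have "1 + x < (1 + x/2)\<^sup>2" by (simp add: power2_eq_square algebra_simps)
    also have "\<dots> \<le> (exp (x/2))\<^sup>2" using True exp_ge_add_one_self[of "x/2"] by (intro power_mono) auto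
    also have "\<dots> = exp x" by (simp add: power2_eq_square flip: exp_add)
    finally show ?thesis .
  next
    case False
    then have "1 + x < 0" by simp
    then show ?thesis using exp_gt_zero[of x] by linarith
  qed
qed

lemma amgm_strict:
  fixes a b u :: real
  assumes "a > 0" "b > 0" "a \<noteq> b" "0 < u" "u < 1"
  shows "a powr (1 - u) * b powr u < (1 - u) * a + u * b"
proof -
  define M where "M = (1 - u) * ln a + u * ln b"
  have lab: "ln a \<noteq> ln b" using assms by simp
  have "ln a - M = u * (ln a - ln b)" by (simp add: M_def algebra_simps)
  then have ne1: "ln a - M \<noteq> 0" using lab assms by simp
  have "ln b - M = (1 - u) * (ln b - ln a)" by (simp add: M_def algebra_simps)
  then have ne2: "ln b - M \<noteq> 0" using lab assms by simp
  have "a = exp M * exp (ln a - M)" using assms by (simp flip: exp_add)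
  then have A: "a > exp M * (1 + (ln a - M))" using exp_strict[OF ne1] by (metis exp_gt_zero mult_strict_left_mono)
  have "b = exp M * exp (ln b - M)" using assms by (simp flip: exp_add)
  then have B: "b > exp M * (1 + (ln b - M))" using exp_strict[OF ne2] by (metis exp_gt_zero mult_strict_left_mono)
  have "(1 - u) * a + u * b > (1 - u) * (exp M * (1 + (ln a - M))) + u * (exp M * (1 + (ln b - M)))"
    using A B assms by (intro add_strict_mono mult_strict_left_mono) auto
  also have "(1 - u) * (exp M * (1 + (ln a - M))) + u * (exp M * (1 + (ln b - M))) = exp M"
    by (simp add: M_def algebra_simps)
  also have "exp M = a powr (1 - u) * b powr u" using assms by (simp add: M_def powr_def exp_add)
  finally show ?thesis .
qed

context sg begin

lemma Rpos: assumes NR: "numerical_range DA A \<subseteq> {z. Re z > 0}" and z: "z \<in> DA" "z \<noteq> 0"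
  shows "rinner (A z) z > 0"
proof -
  define c where "c = 1 / norm z"
  have c: "c > 0" using z by (simp add: c_def)
  have yD: "c *\<^sub>R z \<in> DA" and Ay: "A (c *\<^sub>R z) = c *\<^sub>R A z" using DA_scaleR[OF z(1)] by auto
  have "norm (c *\<^sub>R z) = 1" using z by (simp add: c_def)
  then have "cinner (A (c *\<^sub>R z)) (c *\<^sub>R z) \<in> numerical_range DA A"
    unfolding numerical_range_def using yD by blast
  then have "Re (cinner (A (c *\<^sub>R z)) (c *\<^sub>R z)) > 0" using NR by blast
  then have "c * c * rinner (A z) z > 0" unfolding Ay by (simp add: rinner_def[symmetric] rinner_simps)
  then show ?thesis using c by (simp add: zero_less_mult_iff)
qed

lemma Rlow: assumes NR: "numerical_range DA A \<subseteq> {z. Re z > 0}" and z: "z \<in> DA" "z \<noteq> 0"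
  shows "rinner (A z) z \<ge> num_lower_bound DA A * (norm z)\<^sup>2"
proof -
  define c where "c = 1 / norm z"
  have c: "c > 0" using z by (simp add: c_def)
  have yD: "c *\<^sub>R z \<in> DA" and Ay: "A (c *\<^sub>R z) = c *\<^sub>R A z" using DA_scaleR[OF z(1)] by auto
  have "norm (c *\<^sub>R z) = 1" using z by (simp add: c_def)
  then have "cinner (A (c *\<^sub>R z)) (c *\<^sub>R z) \<in> numerical_range DA A"
    unfolding numerical_range_def using yD by blast
  then have "num_lower_bound DA A \<le> Re (cinner (A (c *\<^sub>R z)) (c *\<^sub>R z))"
    unfolding num_lower_bound_def
    by (intro cInf_lower imageI) (use NR in \<open>auto intro!: bdd_belowI[of _ 0] less_imp_le\<close>)
  also have "\<dots> = c * c * rinner (A z) z" unfolding Ay by (simp add: rinner_def[symmetric] rinner_simps)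
  finally have "num_lower_bound DA A * (norm z)\<^sup>2 \<le> c * c * rinner (A z) z * (norm z)\<^sup>2"
    by (simp add: mult_right_mono)
  also have "\<dots> = rinner (A z) z" using z by (simp add: c_def power2_eq_square)
  finally show ?thesis .
qed

lemma h_cont: "continuous_on {0..} (\<lambda>t. norm (T t x))"
  by (intro continuous_intros T_cont)

lemma hd_neg: assumes NR: "numerical_range DA A \<subseteq> {z. Re z > 0}" and x: "x \<noteq> 0" and t: "t > 0"
  shows "rinner (v 1 x t) (T t x) / norm (T t x) < 0"
proof -
  have u: "T t x \<in> DA" "T t x \<noteq> 0" using L1[OF t] Tne[OF x] t by auto
  have "v 1 x t = - A (T t x)" using vSuc[of 0 x t] by (simp add: v0)
  then have "rinner (v 1 x t) (T t x) < 0" using Rpos[OF NR u] by (simp add: rinner_simps)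
  then show ?thesis using u by (simp add: divide_neg_pos)
qed

lemma h_decr: assumes NR: "numerical_range DA A \<subseteq> {z. Re z > 0}" and x: "x \<noteq> 0"
  and st: "0 \<le> s" "s < t"
  shows "norm (T t x) < norm (T s x)"
proof (rule DERIV_neg_imp_decreasing_open[OF st(2)])
  fix y assume y: "s < y" "y < t"
  then have "y > 0" using st by simp
  then show "\<exists>d. ((\<lambda>t. norm (T t x)) has_real_derivative d) (at y) \<and> d < 0"
    using hD[OF x] hd_neg[OF NR x] by blast
next
  show "continuous_on {s..t} (\<lambda>t. norm (T t x))"
    by (rule continuous_on_subset[OF h_cont]) (use st in auto)
qed

lemma h_weighted: assumes II: condII and x: "x \<noteq> 0" and ab: "a \<ge> 0" "b \<ge> 0" "a \<noteq> b" and u: "0 < u" "u < 1"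
  shows "norm (T ((1 - u) * a + u * b) x) \<le> norm (T a x) powr (1 - u) * norm (T b x) powr u"
proof (cases "a < b")
  case True
  let ?m = "(1 - u) * a + u * b"
  have d1: "?m - a = u * (b - a)" "b - ?m = (1 - u) * (b - a)" by (auto simp: algebra_simps)
  have p1: "u * (b - a) > 0" "(1 - u) * (b - a) > 0" using True u by simp_all
  have m1: "a < ?m" using d1(1) p1(1) by linarith
  have m2: "?m < b" using d1(2) p1(2) by linarith
  note m = m1 m2
  have e1: "(b - ?m) / (b - a) = 1 - u" using True by (simp add: field_simps)
  have e2: "(?m - a) / (b - a) = u" using True by (simp add: field_simps)
  have "norm (T ?m x) \<le> norm (T a x) powr ((b - ?m) / (b - a)) * norm (T b x) powr ((?m - a) / (b - a))"
    using II x ab m unfolding condII_def by blast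
  then show ?thesis unfolding e1 e2 .
next
  case False
  then have ba: "b < a" using ab by simp
  let ?m = "(1 - u) * a + u * b"
  have d1: "?m - b = (1 - u) * (a - b)" "a - ?m = u * (a - b)" by (auto simp: algebra_simps)
  have p1: "u * (a - b) > 0" "(1 - u) * (a - b) > 0" using ba u by simp_all
  have m1: "b < ?m" using d1(1) p1(2) by linarith
  have m2: "?m < a" using d1(2) p1(1) by linarith
  note m = m1 m2
  have e1: "(a - ?m) / (a - b) = u" using ba by (simp add: field_simps)
  have e2: "(?m - b) / (a - b) = 1 - u" using ba by (simp add: field_simps)
  have "norm (T ?m x) \<le> norm (T b x) powr ((a - ?m) / (a - b)) * norm (T a x) powr ((?m - b) / (a - b))"
    using II x ab m unfolding condII_def by blast
  then show ?thesis unfolding e1 e2 by (simp add: mult.commute)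
qed

lemma h_strict_convex: assumes NR: "numerical_range DA A \<subseteq> {z. Re z > 0}" and II: condII and x: "x \<noteq> 0"
  shows "strictly_convex_on {0..} (\<lambda>t. norm (T t x))"
  unfolding strictly_convex_on_def
proof (intro ballI allI impI, elim conjE)
  fix a b u :: real assume a: "a \<in> {0..}" and b: "b \<in> {0..}" and ab: "a \<noteq> b" and u: "0 < u" "u < 1"
  have ha: "norm (T a x) > 0" "norm (T b x) > 0" using Tne[OF x] a b by auto
  have hne: "norm (T a x) \<noteq> norm (T b x)"
    using h_decr[OF NR x] a b ab by (metis atLeast_iff less_irrefl linorder_neqE_linordered_idom)
  have "norm (T ((1 - u) * a + u * b) x) \<le> norm (T a x) powr (1 - u) * norm (T b x) powr u"
    using h_weighted[OF II x _ _ ab u] a b by simp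
  also have "\<dots> < (1 - u) * norm (T a x) + u * norm (T b x)"
    by (rule amgm_strict[OF ha hne u])
  finally show "norm (T ((1 - u) * a + u * b) x) < (1 - u) * norm (T a x) + u * norm (T b x)" .
qed

lemma h_convex: assumes NR: "numerical_range DA A \<subseteq> {z. Re z > 0}" and II: condII and x: "x \<noteq> 0"
  shows "convex_on {0..} (\<lambda>t. norm (T t x))"
proof (rule convex_on_linorderI)
  fix u a b :: real assume "0 < u" "u < 1" "a \<in> {0..}" "b \<in> {0..}" "a < b"
  then show "norm (T ((1 - u) *\<^sub>R a + u *\<^sub>R b) x) \<le> (1 - u) * norm (T a x) + u * norm (T b x)"
    using h_strict_convex[OF NR II x] unfolding strictly_convex_on_def
    by (metis less_eq_real_def less_irrefl real_scaleR_def)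
qed simp

end

context sg begin

lemma d_part:
  assumes NR: "numerical_range DA A \<subseteq> {z. Re z > 0}" and II: condII and x: "x \<noteq> 0"
  shows "\<exists>d::ereal. d \<le> 0 \<and> ((\<lambda>t. ereal ((norm (T t x) - norm (T 0 x)) / t)) \<longlongrightarrow> d) (at_right 0)
              \<and> (norm x = 1 \<longrightarrow>
                   (\<exists>h'. (\<forall>t>0. ((\<lambda>t. norm (T t x)) has_real_derivative h' t) (at t))
                         \<and> d = (INF t\<in>{0<..}. ereal (h' t))
                         \<and> d \<le> ereal (- num_lower_bound DA A)))
              \<and> (x \<in> DA \<and> norm x = 1 \<longrightarrow>
                   d = ereal (- Re (cinner (A x) x))
                   \<and> (\<exists>h'. (\<forall>t\<ge>0. ((\<lambda>t. norm (T t x)) has_real_derivative h' t) (at t within {0..}))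
                          \<and> continuous_on {0..} h')
                   \<and> (\<forall>n. \<forall>t>0. (deriv ^^ n) (\<lambda>t. norm (T t x)) differentiable (at t)))"
proof -
  define h where "h t = norm (T t x)" for t
  define qq where "qq t = (h t - h 0) / t" for t
  define d where "d = (INF t\<in>{0<..}. ereal (qq t))"
  have hpos: "h t > 0" if "t \<ge> 0" for t using Tne[OF x that] by (simp add: h_def)
  have conv: "convex_on {0..} h" using h_convex[OF NR II x] by (simp add: h_def[abs_def])
  have hd: "(h has_real_derivative (rinner (v 1 x t) (T t x) / norm (T t x))) (at t)" if "t > 0" for t
    using hD[OF x that] by (simp add: h_def[abs_def])
  have mono: "qq s \<le> qq t" if st: "0 < s" "s \<le> t" for s t
  proof -
    define u where "u = s / t"
    have u: "0 \<le> u" "u \<le> 1" using st by (auto simp: u_def)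
    have "h ((1 - u) *\<^sub>R 0 + u *\<^sub>R t) \<le> (1 - u) * h 0 + u * h t"
      using convex_onD[OF conv u, of 0 t] st by simp
    moreover have "(1 - u) *\<^sub>R 0 + u *\<^sub>R t = s" using st by (simp add: u_def)
    ultimately have "h s - h 0 \<le> (s / t) * (h t - h 0)" by (simp add: u_def algebra_simps)
    then have "(h s - h 0) / s \<le> (h t - h 0) / t" using st by (simp add: field_simps)
    then show ?thesis by (simp add: qq_def)
  qed
  have dle: "d \<le> ereal (qq t)" if "t > 0" for t unfolding d_def using that by (intro INF_lower) auto
  have lim: "((\<lambda>t. ereal (qq t)) \<longlongrightarrow> d) (at_right 0)"
  proof (rule order_tendstoI)
    fix a assume ad: "a < d"
    show "\<forall>\<^sub>F t in at_right 0. a < ereal (qq t)"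
      using eventually_at_right_less[of 0] by eventually_elim (use dle ad in \<open>auto intro: less_le_trans\<close>)
  next
    fix a assume "d < a"
    then obtain t0 where t0: "t0 > 0" "ereal (qq t0) < a" unfolding d_def INF_less_iff by auto
    show "\<forall>\<^sub>F t in at_right 0. ereal (qq t) < a"
      unfolding eventually_at_right_field
    proof (intro exI[of _ t0] conjI allI impI)
      fix t :: real assume "0 < t" "t < t0"
      then have "qq t \<le> qq t0" using mono by simp
      then show "ereal (qq t) < a" using t0 by (meson ereal_less_eq(3) le_less_trans)
    qed (use t0 in auto)
  qed
  have d0: "d \<le> 0"
  proof -
    have "h 1 < h 0" using h_decr[OF NR x, of 0 1] by (simp add: h_def)
    then have "qq 1 < 0" by (simp add: qq_def)
    then show ?thesis using dle[of 1] by (simp add: order_trans)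
  qed
  have unit: "\<exists>h'. (\<forall>t>0. (h has_real_derivative h' t) (at t))
                         \<and> d = (INF t\<in>{0<..}. ereal (h' t))
                         \<and> d \<le> ereal (- num_lower_bound DA A)" if nx: "norm x = 1"
  proof (intro exI[of _ "\<lambda>t. rinner (v 1 x t) (T t x) / norm (T t x)"] conjI allI impI)
    let ?hd = "\<lambda>t. rinner (v 1 x t) (T t x) / norm (T t x)"
    show "(h has_real_derivative ?hd t) (at t)" if "t > 0" for t using hd that by blast
    have tang: "qq t \<le> ?hd t" if t: "t > 0" for t
    proof -
      have "h 0 - h t \<ge> ?hd t * (0 - t)"
        by (rule convex_on_imp_above_tangent[OF conv])
           (use t hd[OF t] in \<open>auto intro: has_field_derivative_at_within\<close>)
      then show ?thesis using t by (simp add: qq_def field_simps)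
    qed
    show "d = (INF t\<in>{0<..}. ereal (?hd t))"
    proof (rule antisym)
      show "d \<le> (INF t\<in>{0<..}. ereal (?hd t))"
      proof (rule INF_greatest)
        fix t :: real assume "t \<in> {0<..}"
        then have t: "t > 0" by simp
        have "d \<le> ereal (qq t)" by (rule dle[OF t])
        also have "\<dots> \<le> ereal (?hd t)" using tang[OF t] by simp
        finally show "d \<le> ereal (?hd t)" .
      qed
      show "(INF t\<in>{0<..}. ereal (?hd t)) \<le> d"
        unfolding d_def
      proof (rule INF_greatest)
        fix t :: real assume "t \<in> {0<..}"
        then have t: "t > 0" by simp
        have hc: "continuous_on {0..t} h"
          by (rule continuous_on_subset[OF h_cont[of x, folded h_def[abs_def]]]) auto
        have hdiff: "h differentiable (at y)" if "0 < y" "y < t" for y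
          using hd[OF that(1)] unfolding real_differentiable_def by blast
        obtain l z where z: "0 < z" "z < t" "DERIV h z :> l" "h t - h 0 = (t - 0) * l"
          using MVT[OF t hc hdiff] by blast
        have "l = ?hd z" using z(3) hd[OF z(1)] DERIV_unique by blast
        then have "qq t = ?hd z" using z t by (simp add: qq_def)
        moreover have "(INF t\<in>{0<..}. ereal (?hd t)) \<le> ereal (?hd z)" using z by (intro INF_lower) auto
        ultimately show "(INF t\<in>{0<..}. ereal (?hd t)) \<le> ereal (qq t)" by simp
      qed
    qed
    show "d \<le> ereal (- num_lower_bound DA A)"
    proof -
      let ?m = "num_lower_bound DA A"
      have b: "?hd t \<le> - ?m * h t" if t: "t > 0" for t
      proof -
        have u: "T t x \<in> DA" "T t x \<noteq> 0" using L1[OF t] Tne[OF x] t by auto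
        have "v 1 x t = - A (T t x)" using vSuc[of 0 x t] by (simp add: v0)
        then have "rinner (v 1 x t) (T t x) \<le> - ?m * (norm (T t x))\<^sup>2"
          using Rlow[OF NR u] by (simp add: rinner_simps)
        then show ?thesis using u by (simp add: h_def field_simps power2_eq_square)
      qed
      have L: "((\<lambda>t. ereal (- ?m * h t)) \<longlongrightarrow> ereal (- ?m * h 0)) (at_right 0)"
      proof -
        have "((\<lambda>t. h t) \<longlongrightarrow> h 0) (at_right 0)"
          unfolding h_def using T_at0[of x] by (simp add: T0 tendsto_norm)
        then show ?thesis by (intro tendsto_intros)
      qed
      have "d \<le> ereal (- ?m * h 0)"
      proof (rule tendsto_lowerbound[OF L])
        show "\<forall>\<^sub>F t in at_right 0. d \<le> ereal (- ?m * h t)"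
          using eventually_at_right_less[of 0]
        proof eventually_elim
          case (elim t)
          have "d \<le> ereal (qq t)" using dle elim by blast
          also have "\<dots> \<le> ereal (?hd t)" using tang elim by simp
          also have "\<dots> \<le> ereal (- ?m * h t)" using b elim by simp
          finally show ?case .
        qed
      qed simp
      then show ?thesis using nx by (simp add: h_def T0)
    qed
  qed
  have inD: "d = ereal (- Re (cinner (A x) x))
                   \<and> (\<exists>h'. (\<forall>t\<ge>0. (h has_real_derivative h' t) (at t within {0..}))
                          \<and> continuous_on {0..} h')
                   \<and> (\<forall>n. \<forall>t>0. (deriv ^^ n) h differentiable (at t))" if xD: "x \<in> DA" and nx: "norm x = 1"
  proof (intro conjI)
    let ?hd0 = "\<lambda>t. rinner (- T t (A x)) (T t x) / norm (T t x)"
    have D0: "(h has_real_derivative ?hd0 t) (at t within {0..})" if "t \<ge> 0" for t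
      unfolding h_def[abs_def] by (rule norm_deriv[OF L3[OF xD that] Tne[OF x that]])
    show "\<exists>h'. (\<forall>t\<ge>0. (h has_real_derivative h' t) (at t within {0..})) \<and> continuous_on {0..} h'"
    proof (intro exI[of _ ?hd0] conjI allI impI)
      show "(h has_real_derivative ?hd0 t) (at t within {0..})" if "t \<ge> 0" for t using D0 that by blast
      show "continuous_on {0..} ?hd0"
      proof (rule continuous_on_divide)
        show "continuous_on {0..} (\<lambda>t. rinner (- T t (A x)) (T t x))"
          by (intro bounded_bilinear.continuous_on[OF bounded_bilinear_rinner] continuous_intros T_cont)
        show "continuous_on {0..} (\<lambda>t. norm (T t x))" by (rule h_cont)
        show "\<forall>t\<in>{0..}. norm (T t x) \<noteq> 0" using Tne[OF x] by auto
      qed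
    qed
    have "((\<lambda>y. (h y - h 0) / (y - 0)) \<longlongrightarrow> ?hd0 0) (at 0 within {0..})"
      using D0[of 0] unfolding has_field_derivative_iff by simp
    then have "(qq \<longlongrightarrow> ?hd0 0) (at_right 0)"
      unfolding at_within_Ici_at_right qq_def[abs_def] by simp
    then have E: "((\<lambda>t. ereal (qq t)) \<longlongrightarrow> ereal (?hd0 0)) (at_right 0)" by (rule tendsto_ereal)
    have "d = ereal (?hd0 0)" by (rule tendsto_unique[OF _ lim E]) simp
    then show "d = ereal (- Re (cinner (A x) x))"
      using nx by (simp add: T0 rinner_def cinner_minus_left)
    show "\<forall>n. \<forall>t>0. (deriv ^^ n) h differentiable (at t)"
      using h_smooth[OF x] by (simp add: h_def[abs_def])
  qed
  show ?thesis
    apply (rule exI[of _ d])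
    using d0 lim unit inD by (simp add: qq_def h_def[abs_def])
qed

end

theorem theorem2p5:
  fixes T :: "real \<Rightarrow> 'a::complex_hilbert \<Rightarrow> 'a"
    and A :: "'a \<Rightarrow> 'a"
    and DA :: "'a set"
  assumes semigroup: "C0_semigroup T"
    and gen: "is_generator T DA (\<lambda>x. - A x)"
    and bounded: "uniformly_bounded_semigroup T"
    and holo: "holomorphic_semigroup T"
  shows
    "((\<forall>x. x \<in> DA \<and> A x \<in> DA \<and> norm x = 1 \<longrightarrow>
          2 * (Re (cinner (A x) x))\<^sup>2 \<le> Re (cinner (A (A x)) x) + (norm (A x))\<^sup>2)
      \<longleftrightarrow>
      (\<forall>u0. u0 \<noteq> 0 \<longrightarrow> (\<forall>r s t. 0 \<le> r \<and> r < s \<and> s < t \<longrightarrow>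
          norm (T s u0) \<le> norm (T r u0) powr ((t - s) / (t - r)) * norm (T t u0) powr ((s - r) / (t - r)))))
    \<and>
    (((\<forall>x. x \<in> DA \<and> A x \<in> DA \<and> norm x = 1 \<longrightarrow>
          2 * (Re (cinner (A x) x))\<^sup>2 \<le> Re (cinner (A (A x)) x) + (norm (A x))\<^sup>2)
      \<and> (\<forall>u0. u0 \<noteq> 0 \<longrightarrow> (\<forall>r s t. 0 \<le> r \<and> r < s \<and> s < t \<longrightarrow>
          norm (T s u0) \<le> norm (T r u0) powr ((t - s) / (t - r)) * norm (T t u0) powr ((s - r) / (t - r))))
      \<and> numerical_range DA A \<subseteq> {z. Re z > 0})
     \<longrightarrow>
     (\<forall>u0. u0 \<noteq> 0 \<longrightarrow>
        (let h = (\<lambda>t. norm (T t u0)) in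
          (\<forall>s t. 0 \<le> s \<and> s < t \<longrightarrow> h t < h s)
          \<and> strictly_convex_on {0..} h
          \<and> (\<exists>d::ereal. d \<le> 0 \<and> ((\<lambda>t. ereal ((h t - h 0) / t)) \<longlongrightarrow> d) (at_right 0)
              \<and> (norm u0 = 1 \<longrightarrow>
                   (\<exists>h'. (\<forall>t>0. (h has_real_derivative h' t) (at t))
                         \<and> d = (INF t\<in>{0<..}. ereal (h' t))
                         \<and> d \<le> ereal (- num_lower_bound DA A)))
              \<and> (u0 \<in> DA \<and> norm u0 = 1 \<longrightarrow>
                   d = ereal (- Re (cinner (A u0) u0))
                   \<and> (\<exists>h'. (\<forall>t\<ge>0. (h has_real_derivative h' t) (at t within {0..}))
                          \<and> continuous_on {0..} h')
                   \<and> (\<forall>n. \<forall>t>0. (deriv ^^ n) h differentiable (at t)))))))"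
proof -
  interpret sg T A DA using semigroup gen holo by (rule sg.intro)
  have eq: "condI \<longleftrightarrow> condII" using I_imp_II II_imp_I by blast
  have part2: "condI \<and> condII \<and> numerical_range DA A \<subseteq> {z. Re z > 0} \<longrightarrow>
     (\<forall>u0. u0 \<noteq> 0 \<longrightarrow>
        (let h = (\<lambda>t. norm (T t u0)) in
          (\<forall>s t. 0 \<le> s \<and> s < t \<longrightarrow> h t < h s)
          \<and> strictly_convex_on {0..} h
          \<and> (\<exists>d::ereal. d \<le> 0 \<and> ((\<lambda>t. ereal ((h t - h 0) / t)) \<longlongrightarrow> d) (at_right 0)
              \<and> (norm u0 = 1 \<longrightarrow>
                   (\<exists>h'. (\<forall>t>0. (h has_real_derivative h' t) (at t))
                         \<and> d = (INF t\<in>{0<..}. ereal (h' t))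
                         \<and> d \<le> ereal (- num_lower_bound DA A)))
              \<and> (u0 \<in> DA \<and> norm u0 = 1 \<longrightarrow>
                   d = ereal (- Re (cinner (A u0) u0))
                   \<and> (\<exists>h'. (\<forall>t\<ge>0. (h has_real_derivative h' t) (at t within {0..}))
                          \<and> continuous_on {0..} h')
                   \<and> (\<forall>n. \<forall>t>0. (deriv ^^ n) h differentiable (at t))))))"
  proof (intro impI allI, elim conjE)
    fix u0 :: 'a
    assume II: condII and NR: "numerical_range DA A \<subseteq> {z. Re z > 0}" and u0: "u0 \<noteq> 0"
    show "let h = (\<lambda>t. norm (T t u0)) in
          (\<forall>s t. 0 \<le> s \<and> s < t \<longrightarrow> h t < h s)
          \<and> strictly_convex_on {0..} h
          \<and> (\<exists>d::ereal. d \<le> 0 \<and> ((\<lambda>t. ereal ((h t - h 0) / t)) \<longlongrightarrow> d) (at_right 0)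
              \<and> (norm u0 = 1 \<longrightarrow>
                   (\<exists>h'. (\<forall>t>0. (h has_real_derivative h' t) (at t))
                         \<and> d = (INF t\<in>{0<..}. ereal (h' t))
                         \<and> d \<le> ereal (- num_lower_bound DA A)))
              \<and> (u0 \<in> DA \<and> norm u0 = 1 \<longrightarrow>
                   d = ereal (- Re (cinner (A u0) u0))
                   \<and> (\<exists>h'. (\<forall>t\<ge>0. (h has_real_derivative h' t) (at t within {0..}))
                          \<and> continuous_on {0..} h')
                   \<and> (\<forall>n. \<forall>t>0. (deriv ^^ n) h differentiable (at t))))"
      unfolding Let_def
      using h_decr[OF NR u0] h_strict_convex[OF NR II u0] d_part[OF NR II u0] by blast
  qed
  show ?thesis using eq part2 unfolding condI_def condII_def by blast
qed

end
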